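(* Let $\{\boldsymbol A_\eta\}_{\eta\in\mathcal I}$ and $\{\boldsymbol B_\eta\}_{\eta\in\mathcal I}$ be two ergodic families of nonnegative $n\times n$ matrices driven by the same environmental Markov chain $(\tau_t)$, and assume that for every $\eta\in\mathcal I$ the matrices $\boldsymbol A_\eta$ and $\boldsymbol B_\eta$ have the same incidence pattern, i.e. $B^{ij}_\eta=0 \iff A^{ij}_\eta=0$ for all $i,j$. Let $\lambda_S$ and $\lambda_S'$ be the stochastic growth rates of $\boldsymbol z(t+1)=\boldsymbol A_{\tau_{t+1}}\boldsymbol z(t)$ and $\boldsymbol z'(t+1)=\boldsymbol B_{\tau_{t+1}}\boldsymbol z'(t)$ respectively. Define for each $\eta$ and $i,j\in\{1,\dots,n\}$ $$W^{ij}_\eta=\begin{cases}\dfrac{A^{ij}_\eta-B^{ij}_\eta}{B^{ij}_\eta}& \text{if } B^{ij}_\eta\neq 0,\\[2mm] 0 & \text{if } B^{ij}_\eta=0,\end{cases}\qquad W^m_\eta=\min_{i,j}W^{ij}_\eta,\quad W^M_\eta=\max_{i,j}W^{ij}_\eta .$$ Then $W^M_\eta\ge W^m_\eta>-1$ for every $\eta$, and $$\log\lambda_S'+\sum_{\eta\in\mathcal I}\pi_\eta\log(1+W^m_\eta)\;\le\;\log\lambda_S\;\le\;\log\lambda_S'+\sum_{\eta\in\mathcal I}\pi_\eta\log(1+W^M_\eta).$$ In particular, if $\boldsymbol B_\eta=\boldsymbol B$ for all $\eta$ (a fixed nonnegative matrix with the same incidence pattern as every $\boldsymbol A_\eta$),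 then $$\log\rho(\boldsymbol B)+\sum_{\eta}\pi_\eta\log(1+W^m_\eta)\le\log\lambda_S\le\log\rho(\boldsymbol B)+\sum_\eta\pi_\eta\log(1+W^M_\eta),$$ where $\rho$ denotes the spectral radius.
   Context: Standing setting: $\mathcal I$ is a finite or countable set of environmental states; $(\tau_t)_{t\ge0}$ is a homogeneous Markov chain on $\mathcal I$ with a unique stationary distribution $\boldsymbol\pi=(\pi_\eta)_{\eta\in\mathcal I}$ to which its transition probabilities converge geometrically (for finite $\mathcal I$ it suffices that the chain be irreducible and aperiodic). For each $\eta$, $\boldsymbol A_\eta=[A^{ij}_\eta]$ is a nonnegative $n\times n$ matrix. A family $\{\boldsymbol A_\eta\}$ is called ergodic if there is an integer $g\ge1$ such that every product of $g$ matrices from the family (repetitions allowed) has all entries positive, and there are constants $\alpha,\beta>0$ with every entry of every $\boldsymbol A_\eta$ at most $\beta$ and every positive entry at least $\alpha$. The population model is $\boldsymbol z(t+1)=\boldsymbol A_{\tau_{t+1}}\boldsymbol z(t)$ with fixed nonzero $\boldsymbol z(0)\ge 0$; $\|\cdot\|$ is the $\ell^1$ norm. Under these hypotheses the stochastic growth rate (SGR) $\lambda_S$ exists, defined by $\log\lambda_S=\lim_{t\to\infty}\frac1t\log\|\boldsymbol z(t)\|$ almost surely; it is finite and independent of $\boldsymbol z(0)$ and of the initial law of $\tau$. *)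

theory Defs
  imports "HOL-Probability.Probability"
begin

definition stochastic_matrix :: "('i::countable \<Rightarrow> 'i \<Rightarrow> real) \<Rightarrow> bool" where
  "stochastic_matrix P \<longleftrightarrow> (\<forall>i j. 0 \<le> P i j) \<and> (\<forall>i. ((\<lambda>j. P i j) has_sum 1) UNIV)"

fun trans_pow :: "('i::countable \<Rightarrow> 'i \<Rightarrow> real) \<Rightarrow> nat \<Rightarrow> 'i \<Rightarrow> 'i \<Rightarrow> real" where
  "trans_pow P 0 i j = (if i = j then 1 else 0)"
| "trans_pow P (Suc k) i j = (\<Sum>\<^sub>\<infinity>l. trans_pow P k i l * P l j)"

definition distribution :: "('i::countable \<Rightarrow> real) \<Rightarrow> bool" where
  "distribution p \<longleftrightarrow> (\<forall>i. 0 \<le> p i) \<and> (p has_sum 1) UNIV"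

definition stationary :: "('i::countable \<Rightarrow> 'i \<Rightarrow> real) \<Rightarrow> ('i \<Rightarrow> real) \<Rightarrow> bool" where
  "stationary P p \<longleftrightarrow> distribution p \<and> (\<forall>j. ((\<lambda>i. p i * P i j) has_sum p j) UNIV)"

definition geom_converges :: "('i::countable \<Rightarrow> 'i \<Rightarrow> real) \<Rightarrow> ('i \<Rightarrow> real) \<Rightarrow> bool" where
  "geom_converges P p \<longleftrightarrow> (\<exists>r. 0 \<le> r \<and> r < 1 \<and>
     (\<forall>i. \<exists>C. \<forall>k. (\<lambda>j. \<bar>trans_pow P k i j - p j\<bar>) summable_on UNIV \<and>
                   (\<Sum>\<^sub>\<infinity>j. \<bar>trans_pow P k i j - p j\<bar>) \<le> C * r ^ k))"

text \<open>(tau t) for t = 0,1,2,... is a homogeneous Markov chain on M with transition matrix P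
  (arbitrary initial law).\<close>
definition markov_chain ::
  "'w measure \<Rightarrow> (nat \<Rightarrow> 'w \<Rightarrow> 'i::countable) \<Rightarrow> ('i \<Rightarrow> 'i \<Rightarrow> real) \<Rightarrow> bool" where
  "markov_chain M tau P \<longleftrightarrow> prob_space M \<and> stochastic_matrix P \<and>
     (\<forall>t. tau t \<in> measurable M (count_space UNIV)) \<and>
     (\<forall>t (h :: nat \<Rightarrow> 'i) j.
        measure M {w \<in> space M. (\<forall>s\<le>t. tau s w = h s) \<and> tau (Suc t) w = j}
        = measure M {w \<in> space M. \<forall>s\<le>t. tau s w = h s} * P (h t) j)"

definition nonneg_mat :: "real^'n^'n \<Rightarrow> bool" where
  "nonneg_mat X \<longleftrightarrow> (\<forall>i j. 0 \<le> X $ i $ j)"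

definition mat_list_prod :: "(real^'n^'n) list \<Rightarrow> real^'n^'n" where
  "mat_list_prod xs = foldr (**) xs (mat 1)"

definition ergodic_family :: "('i \<Rightarrow> real^'n^'n) \<Rightarrow> bool" where
  "ergodic_family A \<longleftrightarrow> (\<forall>e. nonneg_mat (A e)) \<and>
     (\<exists>g::nat. g \<ge> 1 \<and> (\<forall>es. length es = g \<longrightarrow>
         (\<forall>i j. 0 < mat_list_prod (map A es) $ i $ j))) \<and>
     (\<exists>\<alpha> \<beta>::real. 0 < \<alpha> \<and> 0 < \<beta> \<and>
         (\<forall>e i j. A e $ i $ j \<le> \<beta>) \<and> (\<forall>e i j. 0 < A e $ i $ j \<longrightarrow> \<alpha> \<le> A e $ i $ j))"

fun popz :: "('i \<Rightarrow> real^'n^'n) \<Rightarrow> (nat \<Rightarrow> 'w \<Rightarrow> 'i) \<Rightarrow> real^'n \<Rightarrow> 'w \<Rightarrow> nat \<Rightarrow> real^'n" where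
  "popz A tau z0 w 0 = z0"
| "popz A tau z0 w (Suc t) = A (tau (Suc t) w) *v popz A tau z0 w t"

definition l1norm :: "real^'n \<Rightarrow> real" where
  "l1norm x = (\<Sum>i\<in>UNIV. \<bar>x $ i\<bar>)"

definition is_log_sgr ::
  "'w measure \<Rightarrow> ('i \<Rightarrow> real^'n^'n) \<Rightarrow> (nat \<Rightarrow> 'w \<Rightarrow> 'i) \<Rightarrow> real^'n \<Rightarrow> real \<Rightarrow> bool" where
  "is_log_sgr M A tau z0 L \<longleftrightarrow>
     (AE w in M. (\<lambda>t. ln (l1norm (popz A tau z0 w t)) / real t) \<longlonglongrightarrow> L)"

definition Wij :: "('i \<Rightarrow> real^'n^'n) \<Rightarrow> ('i \<Rightarrow> real^'n^'n) \<Rightarrow> 'i \<Rightarrow> 'n \<Rightarrow> 'n \<Rightarrow> real" where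
  "Wij A B e i j = (if B e $ i $ j \<noteq> 0 then (A e $ i $ j - B e $ i $ j) / B e $ i $ j else 0)"

definition Wmin :: "('i \<Rightarrow> real^'n^'n) \<Rightarrow> ('i \<Rightarrow> real^'n^'n) \<Rightarrow> 'i \<Rightarrow> real" where
  "Wmin A B e = Min {Wij A B e i j | i j. True}"

definition Wmax :: "('i \<Rightarrow> real^'n^'n) \<Rightarrow> ('i \<Rightarrow> real^'n^'n) \<Rightarrow> 'i \<Rightarrow> real" where
  "Wmax A B e = Max {Wij A B e i j | i j. True}"

definition spectral_radius :: "real^'n^'n \<Rightarrow> real" where
  "spectral_radius X = Max {cmod c | c. \<exists>v :: complex^'n. v \<noteq> 0 \<and>
       (\<chi> i j. complex_of_real (X $ i $ j)) *v v = c *s v}"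

end

theory Submission
  imports Defs "HOL-Analysis.Analysis"
begin


definition vnn :: "real^'n \<Rightarrow> bool" where "vnn x \<longleftrightarrow> (\<forall>i. 0 \<le> x $ i)"

lemma mv_nth: "(X *v x) $ i = (\<Sum>j\<in>UNIV. X $ i $ j * x $ j)"
  by (simp add: matrix_vector_mult_def)

lemma mv_nonneg: "nonneg_mat X \<Longrightarrow> vnn x \<Longrightarrow> vnn (X *v x)"
  unfolding vnn_def nonneg_mat_def mv_nth by (auto intro!: sum_nonneg)

lemma mv_lower:
  assumes "nonneg_mat X" "vnn y" "\<forall>i j. m * Y $ i $ j \<le> X $ i $ j" "\<forall>j. c * y $ j \<le> x $ j"
    "0 \<le> c" "0 \<le> m" "nonneg_mat Y"
  shows "(c * m) * (Y *v y) $ i \<le> (X *v x) $ i"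
proof -
  have "(c * m) * (Y *v y) $ i = (\<Sum>j\<in>UNIV. (m * Y $ i $ j) * (c * y $ j))"
    by (simp add: mv_nth sum_distrib_left algebra_simps)
  also have "\<dots> \<le> (\<Sum>j\<in>UNIV. X $ i $ j * x $ j)"
  proof (rule sum_mono)
    fix j
    have "0 \<le> c * y $ j" using assms unfolding vnn_def by auto
    moreover have "0 \<le> X $ i $ j" using assms unfolding nonneg_mat_def by auto
    ultimately show "(m * Y $ i $ j) * (c * y $ j) \<le> X $ i $ j * x $ j"
      using assms by (meson mult_mono)
  qed
  finally show ?thesis by (simp add: mv_nth)
qed

lemma mv_upper:
  assumes "nonneg_mat X" "vnn x" "\<forall>i j. X $ i $ j \<le> m * Y $ i $ j" "\<forall>j. x $ j \<le> c * y $ j"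
    "0 \<le> c" "0 \<le> m"
  shows "(X *v x) $ i \<le> (c * m) * (Y *v y) $ i"
proof -
  have "(c * m) * (Y *v y) $ i = (\<Sum>j\<in>UNIV. (m * Y $ i $ j) * (c * y $ j))"
    by (simp add: mv_nth sum_distrib_left algebra_simps)
  moreover have "(\<Sum>j\<in>UNIV. X $ i $ j * x $ j) \<le> (\<Sum>j\<in>UNIV. (m * Y $ i $ j) * (c * y $ j))"
  proof (rule sum_mono)
    fix j
    have "0 \<le> x $ j" using assms unfolding vnn_def by auto
    moreover have "0 \<le> X $ i $ j" using assms unfolding nonneg_mat_def by auto
    ultimately show "X $ i $ j * x $ j \<le> (m * Y $ i $ j) * (c * y $ j)"
      using assms by (meson mult_mono order_trans)
  qed
  ultimately show ?thesis by (simp add: mv_nth)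
qed

lemma popz_nonneg: "(\<forall>e. nonneg_mat (X e)) \<Longrightarrow> vnn z \<Longrightarrow> vnn (popz X tau z w t)"
  by (induction t) (auto intro: mv_nonneg)

lemma popz_lower:
  assumes "\<forall>e. nonneg_mat (A e)" "\<forall>e. nonneg_mat (B e)" "\<forall>e. 0 \<le> m e"
    "\<forall>e i j. m e * B e $ i $ j \<le> A e $ i $ j" "vnn z"
  shows "(\<Prod>s<t. m (tau (Suc s) w)) * popz B tau z w t $ i \<le> popz A tau z w t $ i"
proof (induction t arbitrary: i)
  case 0 then show ?case by simp
next
  case (Suc t)
  have "(\<Prod>s<t. m (tau (Suc s) w)) * m (tau (Suc t) w) * (B (tau (Suc t) w) *v popz B tau z w t) $ i
        \<le> (A (tau (Suc t) w) *v popz A tau z w t) $ i"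
    by (rule mv_lower) (use assms Suc popz_nonneg in \<open>auto intro: prod_nonneg\<close>)
  then show ?case by (simp add: mult.commute)
qed

lemma popz_upper:
  assumes "\<forall>e. nonneg_mat (A e)" "\<forall>e. 0 \<le> m e"
    "\<forall>e i j. A e $ i $ j \<le> m e * B e $ i $ j" "vnn z"
  shows "popz A tau z w t $ i \<le> (\<Prod>s<t. m (tau (Suc s) w)) * popz B tau z w t $ i"
proof (induction t arbitrary: i)
  case 0 then show ?case by simp
next
  case (Suc t)
  have "(A (tau (Suc t) w) *v popz A tau z w t) $ i \<le>
     (\<Prod>s<t. m (tau (Suc s) w)) * m (tau (Suc t) w) * (B (tau (Suc t) w) *v popz B tau z w t) $ i"
    by (rule mv_upper) (use assms Suc popz_nonneg in \<open>auto intro: prod_nonneg\<close>)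
  then show ?case by (simp add: mult.commute)
qed

lemma l1norm_nn: "vnn x \<Longrightarrow> l1norm x = (\<Sum>i\<in>UNIV. x $ i)"
  unfolding l1norm_def vnn_def by simp

lemma l1norm_mono_c: "vnn x \<Longrightarrow> vnn y \<Longrightarrow> (\<forall>i. c * x $ i \<le> y $ i) \<Longrightarrow> c * l1norm x \<le> l1norm y"
  by (simp add: l1norm_nn sum_distrib_left sum_mono)

lemma l1norm_mono_c': "vnn x \<Longrightarrow> vnn y \<Longrightarrow> (\<forall>i. y $ i \<le> c * x $ i) \<Longrightarrow> l1norm y \<le> c * l1norm x"
  by (simp add: l1norm_nn sum_distrib_left sum_mono)



lemma mat_list_prod_Cons: "mat_list_prod (x # xs) = x ** mat_list_prod xs"
  by (simp add: mat_list_prod_def)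

lemma popz_prod: "popz X tau u w t = mat_list_prod (map X (rev (map (\<lambda>s. tau (Suc s) w) [0..<t]))) *v u"
proof (induction t)
  case 0 then show ?case by (simp add: mat_list_prod_def)
next
  case (Suc t) then show ?case
    by (simp add: mat_list_prod_Cons matrix_vector_mul_assoc[symmetric])
qed

lemma prod_bounds:
  fixes X :: "'i \<Rightarrow> real^'n^'n"
  assumes nn: "\<forall>e. nonneg_mat (X e)" and a: "0 < \<alpha>" and b: "0 < \<beta>"
    and ub: "\<forall>e i j. X e $ i $ j \<le> \<beta>" and lb: "\<forall>e i j. 0 < X e $ i $ j \<longrightarrow> \<alpha> \<le> X e $ i $ j"
  shows "0 \<le> mat_list_prod (map X es) $ i $ j \<and>
     mat_list_prod (map X es) $ i $ j \<le> (real CARD('n) * \<beta>) ^ length es \<and>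
     (0 < mat_list_prod (map X es) $ i $ j \<longrightarrow> \<alpha> ^ length es \<le> mat_list_prod (map X es) $ i $ j)"
proof (induction es arbitrary: i j)
  case Nil then show ?case by (simp add: mat_list_prod_def mat_def)
next
  case (Cons e es)
  let ?P = "mat_list_prod (map X es)"
  have eq: "mat_list_prod (map X (e # es)) $ i $ j = (\<Sum>k\<in>UNIV. X e $ i $ k * ?P $ k $ j)"
    by (simp add: mat_list_prod_Cons matrix_matrix_mult_def)
  have nnX: "\<And>k. 0 \<le> X e $ i $ k" using nn by (simp add: nonneg_mat_def)
  have t1: "0 \<le> (\<Sum>k\<in>UNIV. X e $ i $ k * ?P $ k $ j)"
    using Cons nnX by (auto intro!: sum_nonneg)
  have "(\<Sum>k\<in>UNIV. X e $ i $ k * ?P $ k $ j) \<le> (\<Sum>k\<in>(UNIV::'n set). \<beta> * (real CARD('n) * \<beta>) ^ length es)"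
  proof (rule sum_mono)
    fix k show "X e $ i $ k * ?P $ k $ j \<le> \<beta> * (real CARD('n) * \<beta>) ^ length es"
      using Cons[of k j] nnX[of k] ub by (meson mult_mono order_less_imp_le b)
  qed
  also have "\<dots> = (real CARD('n) * \<beta>) ^ length (e # es)" by (simp add: algebra_simps)
  finally have t2: "(\<Sum>k\<in>UNIV. X e $ i $ k * ?P $ k $ j) \<le> (real CARD('n) * \<beta>) ^ length (e # es)" .
  have t3: "\<alpha> ^ length (e # es) \<le> (\<Sum>k\<in>UNIV. X e $ i $ k * ?P $ k $ j)"
    if pos: "0 < (\<Sum>k\<in>UNIV. X e $ i $ k * ?P $ k $ j)"
  proof -
    obtain k where k: "0 < X e $ i $ k * ?P $ k $ j"
    proof (rule ccontr)
      assume "\<not> thesis"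
      then have "\<forall>k. X e $ i $ k * ?P $ k $ j \<le> 0" using that by (meson not_le)
      then have "(\<Sum>k\<in>UNIV. X e $ i $ k * ?P $ k $ j) \<le> 0" by (simp add: sum_nonpos)
      with pos show False by simp
    qed
    have xp: "0 < X e $ i $ k" using k nnX[of k] Cons[of k j]
      by (metis less_eq_real_def mult_not_zero)
    have pp: "0 < ?P $ k $ j" using k nnX[of k] Cons[of k j]
      by (metis less_eq_real_def mult_not_zero)
    have "\<alpha> * \<alpha> ^ length es \<le> X e $ i $ k * ?P $ k $ j"
      using lb xp pp Cons[of k j] a by (meson mult_mono less_imp_le zero_le_power)
    also have "\<dots> \<le> (\<Sum>k\<in>UNIV. X e $ i $ k * ?P $ k $ j)"
      by (rule member_le_sum) (use Cons nnX in auto)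
    finally show ?thesis by simp
  qed
  show ?case unfolding eq using t1 t2 t3 by blast
qed

lemma ergodic_row_pos:
  assumes "ergodic_family X"
  shows "\<exists>j. 0 < X e $ i $ j"
proof -
  from assms obtain g where g: "g \<ge> 1" "\<forall>es. length es = g \<longrightarrow> (\<forall>i j. 0 < mat_list_prod (map X es) $ i $ j)"
    unfolding ergodic_family_def by blast
  have nn: "\<forall>e. nonneg_mat (X e)" using assms unfolding ergodic_family_def by blast
  let ?es = "e # replicate (g - 1) e"
  have "length ?es = g" using g by simp
  then have pos: "0 < mat_list_prod (map X ?es) $ i $ i" using g by blast
  show ?thesis
  proof (rule ccontr)
    assume "\<not> ?thesis"
    then have "\<forall>j. X e $ i $ j = 0" using nn unfolding nonneg_mat_def by (metis less_eq_real_def)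
    then have "mat_list_prod (map X ?es) $ i $ i = 0"
      by (simp add: mat_list_prod_Cons matrix_matrix_mult_def)
    with pos show False by simp
  qed
qed

lemma mv_pos:
  assumes "ergodic_family X" "\<forall>j. 0 < y $ j"
  shows "0 < (X e *v y) $ i"
proof -
  obtain j where j: "0 < X e $ i $ j" using ergodic_row_pos[OF assms(1)] by blast
  have nn: "\<forall>k. 0 \<le> X e $ i $ k" using assms(1) unfolding ergodic_family_def nonneg_mat_def by blast
  have "0 < X e $ i $ j * y $ j" using j assms(2) by simp
  also have "\<dots> \<le> (\<Sum>k\<in>UNIV. X e $ i $ k * y $ k)"
    by (rule member_le_sum) (use nn assms(2) in \<open>auto simp add: less_imp_le\<close>)
  finally show ?thesis by (simp add: mv_nth)
qed

lemma l1norm_pos: "vnn u \<Longrightarrow> u \<noteq> 0 \<Longrightarrow> 0 < l1norm u"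
proof -
  assume u: "vnn u" "u \<noteq> 0"
  then obtain k where "u $ k \<noteq> 0" by (metis vec_eq_iff zero_index)
  then have "0 < u $ k" using u unfolding vnn_def by (metis less_eq_real_def)
  also have "\<dots> \<le> (\<Sum>i\<in>UNIV. u $ i)" by (rule member_le_sum) (use u in \<open>auto simp: vnn_def\<close>)
  finally show ?thesis using u by (simp add: l1norm_nn)
qed

lemma ergodic_compare:
  fixes X :: "'i \<Rightarrow> real^'n^'n"
  assumes erg: "ergodic_family X" and u: "vnn u" "u \<noteq> 0" and v: "vnn v"
  shows "\<exists>g c. 1 \<le> g \<and> 0 < c \<and> (\<forall>w t i. g \<le> t \<longrightarrow>
     c * popz X tau v w t $ i \<le> popz X tau u w t $ i \<and> 0 < popz X tau u w t $ i)"
proof -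
  from erg obtain g \<alpha> \<beta> where g: "g \<ge> 1" "\<forall>es. length es = g \<longrightarrow> (\<forall>i j. 0 < mat_list_prod (map X es) $ i $ j)"
    and ab: "0 < \<alpha>" "0 < \<beta>" "\<forall>e i j. X e $ i $ j \<le> \<beta>" "\<forall>e i j. 0 < X e $ i $ j \<longrightarrow> \<alpha> \<le> X e $ i $ j"
    and nn: "\<forall>e. nonneg_mat (X e)"
    unfolding ergodic_family_def by blast
  define b where "b = (real CARD('n) * \<beta>) ^ g"
  define c where "c = \<alpha> ^ g * l1norm u / (b * l1norm v + 1)"
  have b0: "0 \<le> b" using ab by (simp add: b_def)
  have nv: "0 \<le> l1norm v" using v by (simp add: l1norm_nn vnn_def sum_nonneg)
  have nu: "0 < l1norm u" using l1norm_pos u by blast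
  have c0: "0 < c" unfolding c_def using ab nu b0 nv by (intro divide_pos_pos mult_pos_pos) (auto simp: add_nonneg_pos)
  have base0: "c * popz X tau v w g $ i \<le> popz X tau u w g $ i \<and> 0 < popz X tau u w g $ i" for w i
  proof -
    define R where "R = mat_list_prod (map X (rev (map (\<lambda>s. tau (Suc s) w) [0..<g])))"
    have lenR: "length (rev (map (\<lambda>s. tau (Suc s) w) [0..<g])) = g" by simp
    have Rb: "\<And>i j. 0 < R $ i $ j \<and> \<alpha> ^ g \<le> R $ i $ j \<and> R $ i $ j \<le> b"
      using prod_bounds[OF nn ab(1,2,3,4), of "rev (map (\<lambda>s. tau (Suc s) w) [0..<g])"] g(2) lenR
      unfolding R_def b_def by (metis (no_types, lifting))
    have pu: "popz X tau u w g = R *v u" and pv: "popz X tau v w g = R *v v"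
      by (simp_all add: popz_prod R_def)
    have lo: "\<alpha> ^ g * l1norm u \<le> (R *v u) $ i"
    proof -
      have "\<alpha> ^ g * l1norm u = (\<Sum>j\<in>UNIV. \<alpha> ^ g * u $ j)" using u by (simp add: l1norm_nn sum_distrib_left)
      also have "\<dots> \<le> (\<Sum>j\<in>UNIV. R $ i $ j * u $ j)"
        by (rule sum_mono) (use Rb u in \<open>auto simp: vnn_def intro: mult_right_mono\<close>)
      finally show ?thesis by (simp add: mv_nth)
    qed
    have hi: "(R *v v) $ i \<le> b * l1norm v"
    proof -
      have "(\<Sum>j\<in>UNIV. R $ i $ j * v $ j) \<le> (\<Sum>j\<in>UNIV. b * v $ j)"
        by (rule sum_mono) (use Rb v in \<open>auto simp: vnn_def intro: mult_right_mono\<close>)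
      also have "\<dots> = b * l1norm v" using v by (simp add: l1norm_nn sum_distrib_left)
      finally show ?thesis by (simp add: mv_nth)
    qed
    have "c * (R *v v) $ i \<le> c * (b * l1norm v)" using hi c0 by simp
    also have "\<dots> \<le> \<alpha> ^ g * l1norm u"
    proof -
      have "c * (b * l1norm v) = \<alpha> ^ g * l1norm u * ((b * l1norm v) / (b * l1norm v + 1))"
        unfolding c_def by (simp add: field_simps)
      also have "\<dots> \<le> \<alpha> ^ g * l1norm u * 1"
      proof (rule mult_left_mono)
        have bv: "0 \<le> b * l1norm v" using b0 nv by simp
        then show "(b * l1norm v) / (b * l1norm v + 1) \<le> 1" by (smt (verit) divide_le_eq_1)
        show "0 \<le> \<alpha> ^ g * l1norm u" using ab nu by simp
      qed
      finally show ?thesis by simp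
    qed
    finally have "c * (R *v v) $ i \<le> (R *v u) $ i" using lo by linarith
    moreover have "0 < (R *v u) $ i" using lo ab nu by (smt (verit) zero_less_power mult_pos_pos)
    ultimately show ?thesis using pu pv by simp
  qed
  have main: "g \<le> t \<Longrightarrow> \<forall>i. c * popz X tau v w t $ i \<le> popz X tau u w t $ i \<and> 0 < popz X tau u w t $ i" for w t
  proof (induction t rule: dec_induct)
    case base then show ?case using base0[of w] by simp
  next
    case (step t)
    have vv: "vnn (popz X tau v w t)" by (rule popz_nonneg[OF nn v])
    have "\<forall>i. c * 1 * (X (tau (Suc t) w) *v popz X tau v w t) $ i \<le> (X (tau (Suc t) w) *v popz X tau u w t) $ i"
    proof
      fix i
      show "c * 1 * (X (tau (Suc t) w) *v popz X tau v w t) $ i \<le> (X (tau (Suc t) w) *v popz X tau u w t) $ i"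
        by (rule mv_lower) (use step.IH c0 nn vv in \<open>simp_all add: less_imp_le\<close>)
    qed
    moreover have "\<forall>i. 0 < (X (tau (Suc t) w) *v popz X tau u w t) $ i"
      using step.IH by (intro allI mv_pos[OF erg]) blast
    ultimately show ?case by simp
  qed
  show ?thesis by (rule exI[of _ g], rule exI[of _ c]) (use main g c0 in auto)
qed



section \<open>Sums and pmfs\<close>

lemma pmf_summable: "pmf p summable_on A"
proof -
  have "Infinite_Set_Sum.abs_summable_on (pmf p) A" by (rule pmf_abs_summable)
  then have "Infinite_Sum.abs_summable_on (pmf p) A" by (rule abs_summable_equivalent[THEN iffD2])
  then show ?thesis by (rule abs_summable_summable)
qed

lemma bounded_prod_summable:
  fixes q g :: "'a \<Rightarrow> real"
  assumes q: "q summable_on UNIV" "\<forall>x. 0 \<le> q x" and g: "\<forall>x. \<bar>g x\<bar> \<le> K"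
  shows "(\<lambda>x. q x * g x) summable_on UNIV" "Infinite_Sum.abs_summable_on (\<lambda>x. q x * g x) UNIV"
proof -
  have "(\<lambda>x. q x * K) summable_on UNIV" using q(1) by (rule summable_on_cmult_left)
  then have a: "Infinite_Sum.abs_summable_on (\<lambda>x. q x * K) UNIV"
    by (rule summable_on_iff_abs_summable_on_real[THEN iffD1])
  show b: "Infinite_Sum.abs_summable_on (\<lambda>x. q x * g x) UNIV"
  proof (rule Infinite_Sum.abs_summable_on_comparison_test[OF a])
    fix x
    have "\<bar>q x * g x\<bar> = q x * \<bar>g x\<bar>" using q by (simp add: abs_mult)
    also have "\<dots> \<le> q x * K" using q g by (simp add: mult_left_mono)
    also have "\<dots> \<le> \<bar>q x * K\<bar>" by simp
    finally show "norm (q x * g x) \<le> norm (q x * K)" by simp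
  qed
  then show "(\<lambda>x. q x * g x) summable_on UNIV" by (rule summable_on_iff_abs_summable_on_real[THEN iffD2])
qed

lemma exp_infsum:
  fixes g :: "'a \<Rightarrow> real"
  assumes g: "\<forall>x. \<bar>g x\<bar> \<le> K"
  shows "measure_pmf.expectation p g = (\<Sum>\<^sub>\<infinity>x. pmf p x * g x)"
proof -
  have "Infinite_Sum.abs_summable_on (\<lambda>x. pmf p x * g x) UNIV"
    using bounded_prod_summable[OF pmf_summable _ g] by simp
  then have "Infinite_Set_Sum.abs_summable_on (\<lambda>x. pmf p x * g x) UNIV"
    by (rule abs_summable_equivalent[THEN iffD1])
  then show ?thesis by (simp add: pmf_expectation_eq_infsetsum infsetsum_infsum)
qed

lemma nn_integral_has_sum:
  fixes f :: "'a \<Rightarrow> real"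
  assumes "\<forall>x. 0 \<le> f x" "(f has_sum s) UNIV"
  shows "(\<integral>\<^sup>+x. ennreal (f x) \<partial>count_space UNIV) = ennreal s"
proof -
  have "f summable_on UNIV" using assms by (meson has_sum_imp_summable)
  then have "Infinite_Sum.abs_summable_on f UNIV" by (rule summable_on_iff_abs_summable_on_real[THEN iffD1])
  then have ab: "Infinite_Set_Sum.abs_summable_on f UNIV" by (rule abs_summable_equivalent[THEN iffD1])
  have "(\<integral>\<^sup>+x. ennreal (f x) \<partial>count_space UNIV) = ennreal (infsetsum f UNIV)"
    by (rule nn_integral_conv_infsetsum[OF ab]) (use assms in auto)
  also have "infsetsum f UNIV = infsum f UNIV" by (rule infsetsum_infsum[OF ab])
  also have "\<dots> = s" using assms(2) by (simp add: infsumI)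
  finally show ?thesis .
qed

section \<open>Transition kernel\<close>

definition Kp :: "('i::countable \<Rightarrow> 'i \<Rightarrow> real) \<Rightarrow> 'i \<Rightarrow> 'i pmf" where
  "Kp P i = embed_pmf (P i)"

lemma pmf_Kp: "stochastic_matrix P \<Longrightarrow> pmf (Kp P i) j = P i j"
  unfolding Kp_def stochastic_matrix_def
  by (subst pmf_embed_pmf) (use nn_integral_has_sum[of "P i" 1] in auto)

fun Kt :: "('i::countable \<Rightarrow> 'i \<Rightarrow> real) \<Rightarrow> nat \<Rightarrow> 'i \<Rightarrow> 'i pmf" where
  "Kt P 0 a = return_pmf a"
| "Kt P (Suc t) a = Kt P t a \<bind> Kp P"

lemma stoch_le1: "stochastic_matrix P \<Longrightarrow> P i j \<le> 1"
proof -
  assume s: "stochastic_matrix P"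
  have "sum (P i) {j} \<le> 1"
    by (rule finite_sum_le_has_sum) (use s in \<open>auto simp: stochastic_matrix_def\<close>)
  then show ?thesis by simp
qed

lemma pmf_Kt: "stochastic_matrix P \<Longrightarrow> pmf (Kt P t a) j = trans_pow P t a j"
proof (induction t arbitrary: j)
  case 0 then show ?case by (simp add: indicator_def)
next
  case (Suc t)
  have b: "\<forall>l. \<bar>P l j\<bar> \<le> 1" using Suc.prems stoch_le1 unfolding stochastic_matrix_def by auto
  have "pmf (Kt P (Suc t) a) j = measure_pmf.expectation (Kt P t a) (\<lambda>l. P l j)"
    by (simp add: pmf_bind pmf_Kp Suc.prems)
  also have "\<dots> = (\<Sum>\<^sub>\<infinity>l. pmf (Kt P t a) l * P l j)" by (rule exp_infsum[OF b])
  also have "\<dots> = trans_pow P (Suc t) a j" using Suc by simp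
  finally show ?case .
qed

section \<open>Random variables as pmfs\<close>

definition rvpmf :: "'w measure \<Rightarrow> ('w \<Rightarrow> 'a::countable) \<Rightarrow> 'a pmf" where
  "rvpmf M f = Abs_pmf (distr M (count_space UNIV) f)"

lemma rvpmf_eq:
  assumes "prob_space M" "f \<in> measurable M (count_space UNIV)"
  shows "measure_pmf (rvpmf M f) = distr M (count_space UNIV) f"
proof -
  have ps: "prob_space (distr M (count_space UNIV) f)"
    by (rule prob_space.prob_space_distr[OF assms])
  then interpret D: prob_space "distr M (count_space UNIV) f" .
  have ae: "AE x in distr M (count_space UNIV) f. measure (distr M (count_space UNIV) f) {x} \<noteq> 0"
  proof (subst D.AE_support_countable)
    show "sets (distr M (count_space UNIV) f) = UNIV" by simp
    show "\<exists>S. countable S \<and> (AE x in distr M (count_space UNIV) f. x \<in> S)"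
      by (rule exI[of _ UNIV]) simp
  qed
  have mem: "distr M (count_space UNIV) f \<in> {M. prob_space M \<and> sets M = UNIV \<and> (AE x in M. measure M {x} \<noteq> 0)}"
    using ps ae by simp
  then show ?thesis unfolding rvpmf_def by (rule Abs_pmf_inverse)
qed

lemma pmf_rvpmf:
  assumes "prob_space M" "f \<in> measurable M (count_space UNIV)"
  shows "pmf (rvpmf M f) x = measure M {w \<in> space M. f w = x}"
proof -
  have "pmf (rvpmf M f) x = measure (measure_pmf (rvpmf M f)) {x}"
    by (rule measure_pmf_single[symmetric])
  also have "\<dots> = measure (distr M (count_space UNIV) f) {x}"
    by (simp only: rvpmf_eq[OF assms])
  also have "\<dots> = measure M (f -` {x} \<inter> space M)"
    by (rule measure_distr) (use assms in auto)
  also have "f -` {x} \<inter> space M = {w \<in> space M. f w = x}" by auto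
  finally show ?thesis .
qed

lemma map_rvpmf:
  assumes "prob_space M" "f \<in> measurable M (count_space UNIV)"
  shows "map_pmf g (rvpmf M f) = rvpmf M (\<lambda>w. g (f w))"
proof -
  have m2: "(\<lambda>w. g (f w)) \<in> measurable M (count_space UNIV)"
    by (rule measurable_compose[OF assms(2)]) simp
  have "measure_pmf (map_pmf g (rvpmf M f)) = distr (distr M (count_space UNIV) f) (count_space UNIV) g"
    by (simp add: map_pmf_rep_eq rvpmf_eq[OF assms])
  also have "\<dots> = distr M (count_space UNIV) (g \<circ> f)"
    by (rule distr_distr) (use assms in auto)
  also have "\<dots> = measure_pmf (rvpmf M (\<lambda>w. g (f w)))"
    by (simp add: rvpmf_eq[OF assms(1) m2] comp_def)
  finally show ?thesis by (simp only: measure_pmf_inject)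
qed

lemma expectation_rvpmf:
  fixes g :: "'a::countable \<Rightarrow> real"
  assumes "prob_space M" "f \<in> measurable M (count_space UNIV)"
  shows "(\<integral>w. g (f w) \<partial>M) = measure_pmf.expectation (rvpmf M f) g"
  unfolding rvpmf_eq[OF assms] by (rule integral_distr[symmetric, OF assms(2)]) simp



definition hist :: "(nat \<Rightarrow> 'w \<Rightarrow> 'i) \<Rightarrow> nat \<Rightarrow> 'w \<Rightarrow> 'i list" where
  "hist tau t w = map (\<lambda>s. tau s w) [0..<Suc t]"

lemma hist_Suc: "hist tau (Suc t) w = hist tau t w @ [tau (Suc t) w]"
  by (simp add: hist_def)

lemma last_hist: "last (hist tau t w) = tau t w"
  by (simp add: hist_def)

lemma length_hist: "length (hist tau t w) = Suc t"
  by (simp add: hist_def)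

lemma hist_nth: "s \<le> t \<Longrightarrow> hist tau t w ! s = tau s w"
  unfolding hist_def by (simp del: upt_Suc add: less_Suc_eq_le)

lemma hist_eq_iff: "length ys = Suc t \<Longrightarrow> hist tau t w = ys \<longleftrightarrow> (\<forall>s\<le>t. tau s w = ys ! s)"
  unfolding list_eq_iff_nth_eq by (auto simp: length_hist hist_nth less_Suc_eq_le)

lemma hist_meas:
  assumes "\<forall>t. tau t \<in> measurable M (count_space (UNIV :: 'i::countable set))"
  shows "(\<lambda>w. hist tau t w) \<in> measurable M (count_space UNIV)"
proof (induction t)
  case 0
  have "(\<lambda>w. hist tau 0 w) = (\<lambda>w. (\<lambda>e. [e]) (tau 0 w))" by (simp add: hist_def)
  also have "\<dots> \<in> measurable M (count_space UNIV)"
    by (rule measurable_compose[OF assms[rule_format]]) simp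
  finally show ?case .
next
  case (Suc t)
  have "(\<lambda>w. hist tau t w @ [tau (Suc t) w]) \<in> measurable M (count_space UNIV)"
  proof (rule measurable_compose_countable[where f="\<lambda>e w. hist tau t w @ [e]", OF _ assms[rule_format]])
    fix e :: 'i
    show "(\<lambda>w. hist tau t w @ [e]) \<in> measurable M (count_space UNIV)"
      by (rule measurable_compose[OF Suc]) simp
  qed
  then show ?case by (simp add: hist_Suc)
qed

context
  fixes M :: "'w measure" and tau :: "nat \<Rightarrow> 'w \<Rightarrow> 'i::countable" and P
  assumes mc: "markov_chain M tau P"
begin

lemma ps: "prob_space M" using mc by (simp add: markov_chain_def)
lemma stoch: "stochastic_matrix P" using mc by (simp add: markov_chain_def)
lemma tau_meas: "tau t \<in> measurable M (count_space UNIV)" using mc by (simp add: markov_chain_def)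
lemma hmeas: "(\<lambda>w. hist tau t w) \<in> measurable M (count_space UNIV)"
  by (rule hist_meas) (use mc in \<open>simp add: markov_chain_def\<close>)
lemma jmeas: "(\<lambda>w. (hist tau t w, tau (Suc t) w)) \<in> measurable M (count_space UNIV)"
proof (rule measurable_compose_countable[where f="\<lambda>e w. (hist tau t w, e)", OF _ tau_meas])
  fix e :: 'i
  show "(\<lambda>w. (hist tau t w, e)) \<in> measurable M (count_space UNIV)"
    by (rule measurable_compose[OF hmeas]) simp
qed

lemma pmf_J:
  "pmf (rvpmf M (\<lambda>w. (hist tau t w, tau (Suc t) w))) (ys, j) =
   pmf (rvpmf M (hist tau t)) ys * P (last ys) j"
proof (cases "length ys = Suc t")
  case True
  have l: "ys ! t = last ys" using True by (subst last_conv_nth) auto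
  have e1: "{w \<in> space M. hist tau t w = ys \<and> tau (Suc t) w = j} =
        {w \<in> space M. (\<forall>s\<le>t. tau s w = ys ! s) \<and> tau (Suc t) w = j}"
    by (rule Collect_cong) (simp add: hist_eq_iff[OF True])
  have e2: "{w \<in> space M. hist tau t w = ys} = {w \<in> space M. \<forall>s\<le>t. tau s w = ys ! s}"
    by (rule Collect_cong) (simp add: hist_eq_iff[OF True])
  have mk: "measure M {w \<in> space M. (\<forall>s\<le>t. tau s w = ys ! s) \<and> tau (Suc t) w = j}
        = measure M {w \<in> space M. \<forall>s\<le>t. tau s w = ys ! s} * P (ys ! t) j"
    using mc unfolding markov_chain_def by blast
  show ?thesis
    by (simp add: pmf_rvpmf[OF ps jmeas] pmf_rvpmf[OF ps hmeas] e1 e2 mk l)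
next
  case False
  then have e1: "{w \<in> space M. hist tau t w = ys \<and> tau (Suc t) w = j} = {}"
    "{w \<in> space M. hist tau t w = ys} = {}" using length_hist by (metis (mono_tags, lifting) empty_Collect_eq prod.inject)+
  show ?thesis by (simp add: pmf_rvpmf[OF ps jmeas] pmf_rvpmf[OF ps hmeas] e1)
qed

lemma J_bind:
  "rvpmf M (\<lambda>w. (hist tau t w, tau (Suc t) w)) =
   rvpmf M (hist tau t) \<bind> (\<lambda>ys. map_pmf (Pair ys) (Kp P (last ys)))"
proof (rule pmf_eqI)
  fix x :: "'i list \<times> 'i"
  obtain ys j where x: "x = (ys, j)" by (cases x)
  have pm: "pmf (map_pmf (Pair zs) (Kp P (last zs))) (ys, j) = (if zs = ys then P (last ys) j else 0)" for zs
  proof (cases "zs = ys")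
    case True
    then show ?thesis using pmf_map_inj'[of "Pair zs" "Kp P (last zs)" j] by (simp add: pmf_Kp[OF stoch] inj_on_def)
  next
    case False
    then show ?thesis by (subst pmf_map_outside) auto
  qed
  have "pmf (rvpmf M (hist tau t) \<bind> (\<lambda>ys. map_pmf (Pair ys) (Kp P (last ys)))) (ys, j)
      = measure_pmf.expectation (rvpmf M (hist tau t)) (\<lambda>zs. pmf (map_pmf (Pair zs) (Kp P (last zs))) (ys, j))"
    by (rule pmf_bind)
  also have "\<dots> = measure_pmf.expectation (rvpmf M (hist tau t)) (\<lambda>zs. P (last ys) j * indicator {ys} zs)"
    by (rule Bochner_Integration.integral_cong) (auto simp: pm indicator_def)
  also have "\<dots> = P (last ys) j * measure_pmf.expectation (rvpmf M (hist tau t)) (indicator {ys})"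
    by (rule integral_mult_right_zero)
  also have "measure_pmf.expectation (rvpmf M (hist tau t)) (indicator {ys}) = pmf (rvpmf M (hist tau t)) ys"
    by (simp add: measure_pmf_single)
  finally show "pmf (rvpmf M (\<lambda>w. (hist tau t w, tau (Suc t) w))) x =
     pmf (rvpmf M (hist tau t) \<bind> (\<lambda>ys. map_pmf (Pair ys) (Kp P (last ys)))) x"
    by (simp add: x pmf_J)
qed

definition Q :: "nat \<Rightarrow> 'i pmf" where "Q t = rvpmf M (tau t)"

lemma Q_Suc: "Q (Suc t) = Q t \<bind> Kp P"
proof -
  have "Q (Suc t) = map_pmf snd (rvpmf M (\<lambda>w. (hist tau t w, tau (Suc t) w)))"
    by (simp add: Q_def map_rvpmf[OF ps jmeas])
  also have "\<dots> = rvpmf M (hist tau t) \<bind> (\<lambda>ys. Kp P (last ys))"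
    by (simp add: J_bind map_bind_pmf pmf.map_comp comp_def)
  also have "\<dots> = map_pmf last (rvpmf M (hist tau t)) \<bind> Kp P"
    by (simp add: bind_map_pmf)
  also have "map_pmf last (rvpmf M (hist tau t)) = Q t"
    by (simp add: map_rvpmf[OF ps hmeas] last_hist Q_def)
  finally show ?thesis .
qed

lemma Q_Kt: "Q t = Q 0 \<bind> Kt P t"
proof (induction t)
  case 0 then show ?case by (simp add: bind_return_pmf')
next
  case (Suc t) then show ?case by (simp add: Q_Suc bind_assoc_pmf)
qed

lemma expect_tau: "(\<integral>w. (g :: 'i \<Rightarrow> real) (tau t w) \<partial>M) = measure_pmf.expectation (Q t) g"
  unfolding Q_def by (rule expectation_rvpmf[OF ps tau_meas])

end



lemma infsum_diff_real:
  fixes f g :: "'a \<Rightarrow> real"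
  assumes "f summable_on A" "g summable_on A"
  shows "(\<Sum>\<^sub>\<infinity>x\<in>A. f x - g x) = infsum f A - infsum g A"
proof -
  have "(\<Sum>\<^sub>\<infinity>x\<in>A. f x + (- g x)) = infsum f A + (\<Sum>\<^sub>\<infinity>x\<in>A. - g x)"
    by (rule infsum_add[OF assms(1) summable_on_uminus[THEN iffD2, OF assms(2)]])
  then show ?thesis by (simp add: infsum_uminus)
qed

lemma dist_summable: "distribution \<pi> \<Longrightarrow> \<pi> summable_on UNIV"
  unfolding distribution_def by (meson has_sum_imp_summable)

lemma single_conv:
  fixes P :: "'i::countable \<Rightarrow> 'i \<Rightarrow> real" and f :: "'i \<Rightarrow> real"
  assumes st: "stochastic_matrix P" and geom: "geom_converges P \<pi>" and dist: "distribution \<pi>"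
    and fb: "\<forall>x. \<bar>f x\<bar> \<le> K"
  shows "(\<lambda>t. measure_pmf.expectation (Kt P t a) f) \<longlonglongrightarrow> (\<Sum>\<^sub>\<infinity>e. \<pi> e * f e)"
proof -
  obtain r where r: "0 \<le> r" "r < 1" and rr: "\<forall>i. \<exists>C. \<forall>k. (\<lambda>j. \<bar>trans_pow P k i j - \<pi> j\<bar>) summable_on UNIV \<and>
                   (\<Sum>\<^sub>\<infinity>j. \<bar>trans_pow P k i j - \<pi> j\<bar>) \<le> C * r ^ k"
    using geom unfolding geom_converges_def by blast
  obtain C where CC: "\<forall>k. (\<lambda>j. \<bar>trans_pow P k a j - \<pi> j\<bar>) summable_on UNIV \<and>
     (\<Sum>\<^sub>\<infinity>j. \<bar>trans_pow P k a j - \<pi> j\<bar>) \<le> C * r ^ k"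
    using spec[OF rr, of a] by (elim exE) 
  have C: "\<And>k. (\<lambda>j. \<bar>trans_pow P k a j - \<pi> j\<bar>) summable_on UNIV"
     "\<And>k. (\<Sum>\<^sub>\<infinity>j. \<bar>trans_pow P k a j - \<pi> j\<bar>) \<le> C * r ^ k"
    using CC by simp_all
  have K0: "0 \<le> K" using fb by (meson abs_ge_zero order_trans)
  have pinn: "\<forall>x. 0 \<le> \<pi> x" using dist unfolding distribution_def by blast
  define L where "L = (\<Sum>\<^sub>\<infinity>e. \<pi> e * f e)"
  have bnd: "norm (measure_pmf.expectation (Kt P t a) f - L) \<le> K * C * r ^ t" for t
  proof -
    let ?T = "\<lambda>j. trans_pow P t a j"
    have Tnn: "\<forall>j. 0 \<le> ?T j" using pmf_Kt[OF st, of t a] by (metis pmf_nonneg)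
    have pe: "pmf (Kt P t a) = ?T" by (rule ext) (rule pmf_Kt[OF st])
    have Tsum: "?T summable_on UNIV" using pmf_summable[of "Kt P t a" UNIV] unfolding pe .
    have e1: "measure_pmf.expectation (Kt P t a) f = (\<Sum>\<^sub>\<infinity>j. ?T j * f j)"
      using exp_infsum[OF fb, of "Kt P t a"] by (simp add: pmf_Kt[OF st])
    have s1: "(\<lambda>j. ?T j * f j) summable_on UNIV" by (rule bounded_prod_summable(1)[OF Tsum Tnn fb])
    have s2: "(\<lambda>j. \<pi> j * f j) summable_on UNIV" by (rule bounded_prod_summable(1)[OF dist_summable[OF dist] pinn fb])
    have e2: "measure_pmf.expectation (Kt P t a) f - L = (\<Sum>\<^sub>\<infinity>j. (?T j - \<pi> j) * f j)"
      unfolding e1 L_def by (subst infsum_diff_real[OF s1 s2, symmetric]) (simp add: algebra_simps)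
    have sK: "(\<lambda>j. K * \<bar>?T j - \<pi> j\<bar>) summable_on UNIV" by (rule summable_on_cmult_right[OF C(1)])
    have bj: "\<bar>(?T j - \<pi> j) * f j\<bar> \<le> K * \<bar>?T j - \<pi> j\<bar>" for j
    proof -
      have "\<bar>(?T j - \<pi> j) * f j\<bar> = \<bar>?T j - \<pi> j\<bar> * \<bar>f j\<bar>" by (rule abs_mult)
      also have "\<dots> \<le> \<bar>?T j - \<pi> j\<bar> * K" by (rule mult_left_mono) (use fb in auto)
      also have "\<dots> = K * \<bar>?T j - \<pi> j\<bar>" by (rule mult.commute)
      finally show ?thesis .
    qed
    have ab: "Infinite_Sum.abs_summable_on (\<lambda>j. (?T j - \<pi> j) * f j) UNIV"
    proof (rule Infinite_Sum.abs_summable_on_comparison_test)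
      show "Infinite_Sum.abs_summable_on (\<lambda>j. K * \<bar>?T j - \<pi> j\<bar>) UNIV"
        using sK by (rule summable_on_iff_abs_summable_on_real[THEN iffD1])
      show "norm ((?T j - \<pi> j) * f j) \<le> norm (K * \<bar>?T j - \<pi> j\<bar>)" for j
        using bj[of j] K0 by simp
    qed
    have "norm (\<Sum>\<^sub>\<infinity>j. (?T j - \<pi> j) * f j) \<le> (\<Sum>\<^sub>\<infinity>j. norm ((?T j - \<pi> j) * f j))"
      by (rule norm_infsum_bound[OF ab])
    also have "\<dots> \<le> (\<Sum>\<^sub>\<infinity>j. K * \<bar>?T j - \<pi> j\<bar>)"
    proof (rule infsum_mono)
      show "(\<lambda>j. norm ((?T j - \<pi> j) * f j)) summable_on UNIV" using ab by simp
      show "(\<lambda>j. K * \<bar>?T j - \<pi> j\<bar>) summable_on UNIV" by (rule sK)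
      show "norm ((?T j - \<pi> j) * f j) \<le> K * \<bar>?T j - \<pi> j\<bar>" for j using bj[of j] by simp
    qed
    also have "\<dots> = K * (\<Sum>\<^sub>\<infinity>j. \<bar>?T j - \<pi> j\<bar>)" by (rule infsum_cmult_right')
    also have "\<dots> \<le> K * (C * r ^ t)" using C(2)[of t] K0 by (rule mult_left_mono)
    finally show ?thesis using e2 by (simp add: mult.assoc)
  qed
  have lim0: "(\<lambda>t. K * C * r ^ t) \<longlonglongrightarrow> 0"
    by (rule tendsto_mult_right_zero, rule LIMSEQ_power_zero) (use r in simp)
  have ev: "eventually (\<lambda>t. norm (measure_pmf.expectation (Kt P t a) f - L) \<le> K * C * r ^ t) sequentially"
    using bnd by (intro always_eventually allI) 
  have "(\<lambda>t. measure_pmf.expectation (Kt P t a) f - L) \<longlonglongrightarrow> 0"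
    by (rule Lim_null_comparison[OF ev lim0])
  then show ?thesis unfolding L_def by (rule LIM_zero_cancel)
qed

lemma expectation_bind_bounded:
  fixes f :: "'a \<Rightarrow> real"
  assumes fb: "\<forall>x. \<bar>f x\<bar> \<le> K"
  shows "measure_pmf.expectation (p \<bind> N) f = measure_pmf.expectation p (\<lambda>a. measure_pmf.expectation (N a) f)"
proof -
  have "measure_pmf.expectation (p \<bind> N) f = integral\<^sup>L (measure_pmf p \<bind> (\<lambda>x. measure_pmf (N x))) f"
    by (simp add: measure_pmf_bind)
  also have "\<dots> = (\<integral>x. integral\<^sup>L (measure_pmf (N x)) f \<partial>measure_pmf p)"
  proof (rule integral_bind[where K="count_space UNIV" and B=K and B'=1])
    show "f \<in> borel_measurable (count_space UNIV)" by simp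
    show "\<bar>f x\<bar> \<le> K" for x using fb by blast
    show "(\<lambda>x. measure_pmf (N x)) \<in> measurable (measure_pmf p) (subprob_algebra (count_space UNIV))"
      using measurable_measure_pmf[of N] by (simp add: measurable_space)
    show "finite_measure (measure_pmf p)" by (rule measure_pmf.finite_measure)
    show "AE x in measure_pmf p. emeasure (measure_pmf (N x)) (space (measure_pmf (N x))) \<le> ennreal 1"
      by (simp add: measure_pmf.emeasure_space_1)
  qed
  finally show ?thesis .
qed

context
  fixes M :: "'w measure" and tau :: "nat \<Rightarrow> 'w \<Rightarrow> 'i::countable" and P
  assumes mc: "markov_chain M tau P"
begin

lemma expect_conv:
  fixes f :: "'i \<Rightarrow> real"
  assumes geom: "geom_converges P \<pi>" and dist: "distribution \<pi>" and fb: "\<forall>x. \<bar>f x\<bar> \<le> K"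
  shows "(\<lambda>t. \<integral>w. f (tau t w) \<partial>M) \<longlonglongrightarrow> (\<Sum>\<^sub>\<infinity>e. \<pi> e * f e)"
proof -
  define L where "L = (\<Sum>\<^sub>\<infinity>e. \<pi> e * f e)"
  define h where "h t a = measure_pmf.expectation (Kt P t a) f" for t a
  have eq: "(\<integral>w. f (tau t w) \<partial>M) = measure_pmf.expectation (Q M tau 0) (h t)" for t
    unfolding expect_tau[OF mc] Q_Kt[OF mc, of t] h_def by (rule expectation_bind_bounded[OF fb])
  have hb: "\<bar>h t a\<bar> \<le> K" for t a
  proof -
    have "\<bar>h t a\<bar> \<le> measure_pmf.expectation (Kt P t a) (\<lambda>x. \<bar>f x\<bar>)"
      unfolding h_def by (rule integral_abs_bound)
    also have "\<dots> \<le> measure_pmf.expectation (Kt P t a) (\<lambda>x. K)"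
      by (rule integral_mono) (use fb in \<open>auto intro!: measure_pmf.integrable_const_bound[where B=K]\<close>)
    also have "\<dots> = K" by simp
    finally show ?thesis .
  qed
  have "(\<lambda>t. measure_pmf.expectation (Q M tau 0) (h t)) \<longlonglongrightarrow> measure_pmf.expectation (Q M tau 0) (\<lambda>a. L)"
  proof (rule integral_dominated_convergence[where w="\<lambda>_. K"])
    show "(\<lambda>a. L) \<in> borel_measurable (measure_pmf (Q M tau 0))" by simp
    show "h t \<in> borel_measurable (measure_pmf (Q M tau 0))" for t by simp
    show "integrable (measure_pmf (Q M tau 0)) (\<lambda>_. K)" by simp
    show "AE a in measure_pmf (Q M tau 0). (\<lambda>t. h t a) \<longlonglongrightarrow> L"
      unfolding h_def L_def
      by (rule AE_I2, rule single_conv[OF stoch[OF mc] geom dist fb])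
    show "AE a in measure_pmf (Q M tau 0). norm (h t a) \<le> K" for t
      using hb by simp
  qed
  then show ?thesis unfolding eq L_def by simp
qed

end



lemma cesaro:
  fixes a :: "nat \<Rightarrow> real"
  assumes "a \<longlonglongrightarrow> L"
  shows "(\<lambda>n. (\<Sum>s<n. a s) / real n) \<longlonglongrightarrow> L"
proof (rule LIMSEQ_I)
  fix \<epsilon> :: real assume e: "0 < \<epsilon>"
  define b where "b s = a s - L" for s
  have "b \<longlonglongrightarrow> 0" unfolding b_def using assms by (rule LIM_zero)
  then obtain N where N: "\<And>s. s \<ge> N \<Longrightarrow> norm (b s) < \<epsilon> / 2"
    using e by (metis LIMSEQ_D half_gt_zero diff_zero)
  define B where "B = (\<Sum>s<N. \<bar>b s\<bar>)"
  have B0: "0 \<le> B" unfolding B_def by (simp add: sum_nonneg)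
  obtain N2 :: nat where N2: "N2 > 2 * B / \<epsilon>" using reals_Archimedean2 by blast
  show "\<exists>no. \<forall>n\<ge>no. norm ((\<Sum>s<n. a s) / real n - L) < \<epsilon>"
  proof (intro exI allI impI)
    fix n assume n: "n \<ge> max (Suc N) N2"
    then have nN: "N \<le> n" and n0: "0 < n" by auto
    have eq: "(\<Sum>s<n. a s) / real n - L = (\<Sum>s<n. b s) / real n"
      using n0 by (simp add: b_def sum_subtractf field_simps)
    have split: "{..<n} = {..<N} \<union> {N..<n}" using nN by auto
    have "\<bar>\<Sum>s<n. b s\<bar> \<le> (\<Sum>s<n. \<bar>b s\<bar>)" by (rule sum_abs)
    also have "\<dots> = B + (\<Sum>s\<in>{N..<n}. \<bar>b s\<bar>)"
      unfolding B_def split by (subst sum.union_disjoint) auto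
    also have "(\<Sum>s\<in>{N..<n}. \<bar>b s\<bar>) \<le> (\<Sum>s\<in>{N..<n}. \<epsilon> / 2)"
      by (rule sum_mono) (use N in \<open>auto simp: less_imp_le\<close>)
    also have "\<dots> \<le> real n * (\<epsilon> / 2)" using e by simp
    finally have s1: "\<bar>\<Sum>s<n. b s\<bar> \<le> B + real n * (\<epsilon> / 2)" by simp
    have "B < real n * (\<epsilon> / 2)"
    proof -
      have "2 * B / \<epsilon> < real n" using N2 n by linarith
      then have "2 * B < real n * \<epsilon>" using e by (simp add: field_simps)
      then show ?thesis by simp
    qed
    with s1 have "\<bar>\<Sum>s<n. b s\<bar> < real n * \<epsilon>" by simp
    then have "\<bar>\<Sum>s<n. b s\<bar> / real n < \<epsilon>" using n0 by (simp add: field_simps)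
    then show "norm ((\<Sum>s<n. a s) / real n - L) < \<epsilon>" using eq by simp
  qed
qed

lemma popz_local:
  "(\<forall>s\<le>t. tau s w = tau' s w') \<Longrightarrow> popz X tau z w t = popz X tau' z w' t"
  by (induction t) auto

lemma popz_hist: "popz X tau z w t = popz X (\<lambda>s ys. ys ! s) z (hist tau t w) t"
  by (rule popz_local) (simp add: hist_nth)

context
  fixes M :: "'w measure" and tau :: "nat \<Rightarrow> 'w \<Rightarrow> 'i::countable" and P
  assumes mc: "markov_chain M tau P"
begin

lemma popz_meas: "(\<lambda>w. F (popz X tau z w t)) \<in> borel_measurable M"
proof -
  have "(\<lambda>w. (\<lambda>ys. F (popz X (\<lambda>s ys. ys ! s) z ys t)) (hist tau t w)) \<in> borel_measurable M"
    by (rule measurable_compose[OF hmeas[OF mc]]) simp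
  then show ?thesis by (subst popz_hist) simp
qed

lemma ftau_meas: "(\<lambda>w. (f :: 'i \<Rightarrow> real) (tau t w)) \<in> borel_measurable M"
  by (rule measurable_compose[OF tau_meas[OF mc]]) simp

lemma sgr_lower:
  fixes D :: "nat \<Rightarrow> 'w \<Rightarrow> real" and f :: "'i \<Rightarrow> real"
  assumes geom: "geom_converges P \<pi>" and dist: "distribution \<pi>" and fb: "\<forall>x. \<bar>f x\<bar> \<le> K"
    and Dmeas: "\<And>t. D t \<in> borel_measurable M"
    and lim: "AE w in M. (\<lambda>t. D t w / real t) \<longlonglongrightarrow> \<Delta>"
    and low: "\<And>t w. g \<le> t \<Longrightarrow> w \<in> space M \<Longrightarrow> (\<Sum>s<t. f (tau (Suc s) w)) + c \<le> D t w"
    and bnd: "\<And>t w. g \<le> t \<Longrightarrow> w \<in> space M \<Longrightarrow> \<bar>D t w\<bar> \<le> real t * K' + C'"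
    and g1: "1 \<le> g"
  shows "(\<Sum>\<^sub>\<infinity>e. \<pi> e * f e) \<le> \<Delta>"
proof -
  interpret prob_space M by (rule ps[OF mc])
  define Lf where "Lf = (\<Sum>\<^sub>\<infinity>e. \<pi> e * f e)"
  define Y where "Y k w = D (k + g) w / real (k + g)" for k w
  define a where "a s = (\<integral>w. f (tau (Suc s) w) \<partial>M)" for s
  define lo where "lo k = ((\<Sum>s<k + g. a s) + c) / real (k + g)" for k
  have tpos: "0 < real (k + g)" for k using g1 by simp
  have Ymeas: "Y k \<in> borel_measurable M" for k unfolding Y_def using Dmeas by measurable
  have Ybnd: "norm (Y k w) \<le> K' + \<bar>C'\<bar>" if "w \<in> space M" for k w
  proof -
    have "\<bar>D (k + g) w\<bar> \<le> real (k + g) * K' + C'" using bnd[of "k + g" w] that by simp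
    then have "\<bar>D (k + g) w\<bar> / real (k + g) \<le> (real (k + g) * K' + C') / real (k + g)"
      using tpos[of k] by (simp add: divide_right_mono)
    also have "\<dots> = K' + C' / real (k + g)" using tpos[of k] by (simp add: field_simps)
    also have "C' / real (k + g) \<le> \<bar>C'\<bar>"
    proof -
      have "C' / real (k + g) \<le> \<bar>C'\<bar> / real (k + g)" using tpos[of k] by (simp add: divide_right_mono)
      also have "\<dots> \<le> \<bar>C'\<bar> / 1" using tpos[of k] g1 by (intro divide_left_mono) auto
      finally show ?thesis by simp
    qed
    finally show ?thesis by (simp add: Y_def)
  qed
  have Yint: "integrable M (Y k)" for k
    by (rule integrable_const_bound[where B="K' + \<bar>C'\<bar>"]) (use Ybnd Ymeas in auto)
  have conv1: "(\<lambda>k. integral\<^sup>L M (Y k)) \<longlonglongrightarrow> integral\<^sup>L M (\<lambda>w. \<Delta>)"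
  proof (rule integral_dominated_convergence[where w="\<lambda>_. K' + \<bar>C'\<bar>"])
    show "(\<lambda>w. \<Delta>) \<in> borel_measurable M" by simp
    show "Y k \<in> borel_measurable M" for k by (rule Ymeas)
    show "integrable M (\<lambda>_. K' + \<bar>C'\<bar>)" by simp
    show "AE w in M. (\<lambda>k. Y k w) \<longlonglongrightarrow> \<Delta>"
      using lim unfolding Y_def
    proof eventually_elim
      case (elim w)
      then show ?case using LIMSEQ_ignore_initial_segment[OF elim, of g] by simp
    qed
    show "AE w in M. norm (Y k w) \<le> K' + \<bar>C'\<bar>" for k
      using Ybnd by (intro AE_I2) auto
  qed
  then have conv1': "(\<lambda>k. integral\<^sup>L M (Y k)) \<longlonglongrightarrow> \<Delta>" by (simp add: prob_space)
  have fint: "integrable M (\<lambda>w. f (tau s w))" for s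
    by (rule integrable_const_bound[where B=K]) (use fb ftau_meas in auto)
  have lo_le: "lo k \<le> integral\<^sup>L M (Y k)" for k
  proof -
    have "integral\<^sup>L M (\<lambda>w. ((\<Sum>s<k + g. f (tau (Suc s) w)) + c) / real (k + g))
        = ((\<Sum>s<k + g. a s) + c) / real (k + g)"
      by (simp add: a_def integral_sum fint prob_space)
    moreover have "integral\<^sup>L M (\<lambda>w. ((\<Sum>s<k + g. f (tau (Suc s) w)) + c) / real (k + g)) \<le> integral\<^sup>L M (Y k)"
    proof (rule integral_mono)
      show "integrable M (\<lambda>w. ((\<Sum>s<k + g. f (tau (Suc s) w)) + c) / real (k + g))"
      proof (rule integrable_divide)
        have "integrable M (\<lambda>w. (\<Sum>s<k + g. f (tau (Suc s) w)))" using fint by (intro Bochner_Integration.integrable_sum) simp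
        then show "integrable M (\<lambda>w. (\<Sum>s<k + g. f (tau (Suc s) w)) + c)"
          by (rule Bochner_Integration.integrable_add) simp
      qed
      show "integrable M (Y k)" by (rule Yint)
      show "((\<Sum>s<k + g. f (tau (Suc s) w)) + c) / real (k + g) \<le> Y k w" if "w \<in> space M" for w
        unfolding Y_def using low[of "k + g" w] that tpos[of k] by (simp add: divide_right_mono)
    qed
    ultimately show ?thesis unfolding lo_def by linarith
  qed
  have aconv: "a \<longlonglongrightarrow> Lf"
    unfolding a_def Lf_def using LIMSEQ_Suc[OF expect_conv[OF mc geom dist fb]] by simp
  have "(\<lambda>n. (\<Sum>s<n. a s) / real n) \<longlonglongrightarrow> Lf" by (rule cesaro[OF aconv])
  then have c1: "(\<lambda>k. (\<Sum>s<k + g. a s) / real (k + g)) \<longlonglongrightarrow> Lf"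
    using LIMSEQ_ignore_initial_segment by blast
  have c2: "(\<lambda>k. c / real (k + g)) \<longlonglongrightarrow> 0"
  proof -
    have "(\<lambda>k. c / real k) \<longlonglongrightarrow> 0" by (rule lim_const_over_n)
    then show ?thesis using LIMSEQ_ignore_initial_segment by blast
  qed
  have "(\<lambda>k. (\<Sum>s<k + g. a s) / real (k + g) + c / real (k + g)) \<longlonglongrightarrow> Lf + 0"
    by (rule tendsto_add[OF c1 c2])
  then have loconv: "lo \<longlonglongrightarrow> Lf" unfolding lo_def by (simp add: add_divide_distrib)
  show ?thesis unfolding Lf_def[symmetric]
    by (rule LIMSEQ_le[OF loconv conv1']) (use lo_le in auto)
qed

end



lemma Wset_finite: "finite {Wij A B e i j | i j. True}"
proof -
  have "{Wij A B e i j | i j. True} = (\<lambda>(i, j). Wij A B e i j) ` UNIV" by auto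
  then show ?thesis by simp
qed

lemma Wset_ne: "{Wij A B e i j | i j. True} \<noteq> {}" by auto

lemma Wmin_le: "Wmin A B e \<le> Wij A B e i j"
  unfolding Wmin_def by (rule Min_le[OF Wset_finite]) auto

lemma Wmax_ge: "Wij A B e i j \<le> Wmax A B e"
  unfolding Wmax_def by (rule Max_ge[OF Wset_finite]) auto

lemma Wmin_in: "\<exists>i j. Wmin A B e = Wij A B e i j"
proof -
  have "Wmin A B e \<in> {Wij A B e i j | i j. True}"
    unfolding Wmin_def by (rule Min_in[OF Wset_finite Wset_ne])
  then show ?thesis by auto
qed

lemma Wmax_in: "\<exists>i j. Wmax A B e = Wij A B e i j"
proof -
  have "Wmax A B e \<in> {Wij A B e i j | i j. True}"
    unfolding Wmax_def by (rule Max_in[OF Wset_finite Wset_ne])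
  then show ?thesis by auto
qed

context
  fixes A B :: "'i \<Rightarrow> real^'n^'n"
  assumes ergA: "ergodic_family A" and ergB: "ergodic_family B"
    and pattern: "\<forall>e i j. B e $ i $ j = 0 \<longleftrightarrow> A e $ i $ j = 0"
begin

lemma nnA: "A e $ i $ j \<ge> 0" using ergA unfolding ergodic_family_def nonneg_mat_def by blast
lemma nnB: "B e $ i $ j \<ge> 0" using ergB unfolding ergodic_family_def nonneg_mat_def by blast

lemma W_range: "\<exists>lo hi. 0 < lo \<and> (\<forall>e i j. lo \<le> 1 + Wij A B e i j \<and> 1 + Wij A B e i j \<le> hi)"
proof -
  obtain aA bA where a: "0 < aA" "0 < bA" "\<forall>e i j. A e $ i $ j \<le> bA" "\<forall>e i j. 0 < A e $ i $ j \<longrightarrow> aA \<le> A e $ i $ j"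
    using ergA unfolding ergodic_family_def by blast
  obtain aB bB where b: "0 < aB" "0 < bB" "\<forall>e i j. B e $ i $ j \<le> bB" "\<forall>e i j. 0 < B e $ i $ j \<longrightarrow> aB \<le> B e $ i $ j"
    using ergB unfolding ergodic_family_def by blast
  define lo where "lo = min 1 (aA / bB)"
  define hi where "hi = max 1 (bA / aB)"
  have "lo \<le> 1 + Wij A B e i j \<and> 1 + Wij A B e i j \<le> hi" for e i j
  proof (cases "B e $ i $ j = 0")
    case True then show ?thesis by (simp add: Wij_def lo_def hi_def)
  next
    case False
    let ?a = "A e $ i $ j" and ?b = "B e $ i $ j"
    have bp: "0 < ?b" using False nnB[of e i j] by simp
    have ap: "0 < ?a" using False pattern nnA[of e i j] by (metis less_eq_real_def)
    have eq: "1 + Wij A B e i j = ?a / ?b" using bp by (simp add: Wij_def field_simps)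
    have "aA / bB \<le> ?a / ?b"
      using a b ap bp by (meson frac_le less_imp_le)
    moreover have "?a / ?b \<le> bA / aB"
      using a b ap bp by (meson frac_le less_imp_le)
    ultimately show ?thesis unfolding eq lo_def hi_def by (meson max.coboundedI2 min.coboundedI2 order_trans)
  qed
  moreover have "0 < lo" using a b by (simp add: lo_def)
  ultimately show ?thesis by blast
qed

lemma A_lower: "(1 + Wmin A B e) * B e $ i $ j \<le> A e $ i $ j"
proof (cases "B e $ i $ j = 0")
  case True
  then have "A e $ i $ j = 0" using pattern by blast
  then show ?thesis using True by simp
next
  case False
  have bp: "0 < B e $ i $ j" using False nnB[of e i j] by simp
  have "(1 + Wmin A B e) * B e $ i $ j \<le> (1 + Wij A B e i j) * B e $ i $ j"
    using Wmin_le[of A B e i j] bp by (simp add: mult_right_mono)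
  also have "\<dots> = A e $ i $ j" using bp by (simp add: Wij_def field_simps)
  finally show ?thesis .
qed

lemma A_upper: "A e $ i $ j \<le> (1 + Wmax A B e) * B e $ i $ j"
proof (cases "B e $ i $ j = 0")
  case True
  then have "A e $ i $ j = 0" using pattern by blast
  then show ?thesis using True by simp
next
  case False
  have bp: "0 < B e $ i $ j" using False nnB[of e i j] by simp
  have "A e $ i $ j = (1 + Wij A B e i j) * B e $ i $ j" using bp by (simp add: Wij_def field_simps)
  also have "\<dots> \<le> (1 + Wmax A B e) * B e $ i $ j"
    using Wmax_ge[of A B e i j] bp by (simp add: mult_right_mono)
  finally show ?thesis .
qed

lemma W_bounds: "\<exists>lo hi. 0 < lo \<and> (\<forall>e. lo \<le> 1 + Wmin A B e \<and> 1 + Wmax A B e \<le> hi \<and> lo \<le> 1 + Wmax A B e \<and> 1 + Wmin A B e \<le> hi)"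
proof -
  obtain lo hi where lh: "0 < lo" "\<forall>e i j. lo \<le> 1 + Wij A B e i j \<and> 1 + Wij A B e i j \<le> hi"
    using W_range by blast
  have "lo \<le> 1 + Wmin A B e \<and> 1 + Wmax A B e \<le> hi \<and> lo \<le> 1 + Wmax A B e \<and> 1 + Wmin A B e \<le> hi" for e
    using Wmin_in[of A B e] Wmax_in[of A B e] lh by auto
  then show ?thesis using lh by blast
qed

lemma ln_bounds: "\<exists>K. (\<forall>e. \<bar>ln (1 + Wmin A B e)\<bar> \<le> K) \<and> (\<forall>e. \<bar>ln (1 + Wmax A B e)\<bar> \<le> K)"
proof -
  obtain lo hi where lh: "0 < lo" "\<forall>e. lo \<le> 1 + Wmin A B e \<and> 1 + Wmax A B e \<le> hi \<and> lo \<le> 1 + Wmax A B e \<and> 1 + Wmin A B e \<le> hi"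
    using W_bounds by blast
  have hi: "0 < hi" using lh by (meson order_less_le_trans)
  have b: "lo \<le> x \<Longrightarrow> x \<le> hi \<Longrightarrow> \<bar>ln x\<bar> \<le> \<bar>ln lo\<bar> + \<bar>ln hi\<bar>" for x
  proof -
    assume x: "lo \<le> x" "x \<le> hi"
    have xp: "0 < x" using x lh by simp
    have "ln lo \<le> ln x" using x xp lh by simp
    moreover have "ln x \<le> ln hi" using x xp by simp
    ultimately show ?thesis by linarith
  qed
  show ?thesis using b lh by blast
qed

lemma W_pos: "-1 < Wmin A B e"
proof -
  obtain lo hi where lh: "0 < lo" "\<forall>e. lo \<le> 1 + Wmin A B e \<and> 1 + Wmax A B e \<le> hi \<and> lo \<le> 1 + Wmax A B e \<and> 1 + Wmin A B e \<le> hi"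
    using W_bounds by blast
  then have "lo \<le> 1 + Wmin A B e" by blast
  then show ?thesis using lh(1) by linarith
qed

lemma Wmin_le_Wmax: "Wmin A B e \<le> Wmax A B e"
  using Wmin_le[of A B e] Wmax_ge[of A B e] order_trans by blast

end



lemma vec_pos_nz: "(\<forall>i. 0 < (x::real^'n) $ i) \<Longrightarrow> x \<noteq> 0"
  by (metis less_irrefl zero_index)

lemma sgr_bounds:
  fixes M :: "'w measure"
    and tau :: "nat \<Rightarrow> 'w \<Rightarrow> 'i::countable"
    and P :: "'i \<Rightarrow> 'i \<Rightarrow> real"
    and \<pi> :: "'i \<Rightarrow> real"
    and A B :: "'i \<Rightarrow> real^'n^'n"
    and z0 z0' :: "real^'n"
    and LA LB :: real
  assumes chain: "markov_chain M tau P"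
    and stat: "stationary P \<pi>"
    and conv: "geom_converges P \<pi>"
    and ergA: "ergodic_family A"
    and ergB: "ergodic_family B"
    and pattern: "\<forall>e i j. B e $ i $ j = 0 \<longleftrightarrow> A e $ i $ j = 0"
    and z0_nonneg: "\<forall>i. 0 \<le> z0 $ i" and z0_nz: "z0 \<noteq> 0"
    and z0'_nonneg: "\<forall>i. 0 \<le> z0' $ i" and z0'_nz: "z0' \<noteq> 0"
    and sgrA: "is_log_sgr M A tau z0 LA"
    and sgrB: "is_log_sgr M B tau z0' LB"
  shows "LB + (\<Sum>\<^sub>\<infinity>e. \<pi> e * ln (1 + Wmin A B e)) \<le> LA
     \<and> LA \<le> LB + (\<Sum>\<^sub>\<infinity>e. \<pi> e * ln (1 + Wmax A B e))"
proof -
  have dist: "distribution \<pi>" using stat unfolding stationary_def by blast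
  have v0: "vnn z0" and v0': "vnn z0'" using z0_nonneg z0'_nonneg by (simp_all add: vnn_def)
  have nnAm: "\<forall>e. nonneg_mat (A e)" using ergA unfolding ergodic_family_def by blast
  have nnBm: "\<forall>e. nonneg_mat (B e)" using ergB unfolding ergodic_family_def by blast
  define fm where "fm e = ln (1 + Wmin A B e)" for e
  define fM where "fM e = ln (1 + Wmax A B e)" for e
  obtain K where K: "\<forall>e. \<bar>fm e\<bar> \<le> K" "\<forall>e. \<bar>fM e\<bar> \<le> K"
    using ln_bounds[OF ergA ergB pattern] unfolding fm_def fM_def by blast
  have Wp: "\<And>e. 0 < 1 + Wmin A B e" using W_pos[OF ergA ergB pattern] by (metis add.commute diff_gt_0_iff_gt diff_minus_eq_add)
  have WMp: "\<And>e. 0 < 1 + Wmax A B e" using Wp Wmin_le_Wmax[OF ergA ergB pattern] by (meson add_le_cancel_left order_less_le_trans)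
  obtain g1 c1 where gc1: "1 \<le> g1" "0 < c1" "\<forall>w t i. g1 \<le> t \<longrightarrow>
     c1 * popz B tau z0' w t $ i \<le> popz B tau z0 w t $ i \<and> 0 < popz B tau z0 w t $ i"
    using ergodic_compare[OF ergB v0 z0_nz v0', of tau] by blast
  obtain g2 c2 where gc2: "1 \<le> g2" "0 < c2" "\<forall>w t i. g2 \<le> t \<longrightarrow>
     c2 * popz B tau z0 w t $ i \<le> popz B tau z0' w t $ i \<and> 0 < popz B tau z0' w t $ i"
    using ergodic_compare[OF ergB v0' z0'_nz v0, of tau] by blast
  define g where "g = max g1 g2"
  have g1: "1 \<le> g" using gc1 by (simp add: g_def)
  define D where "D t w = ln (l1norm (popz A tau z0 w t)) - ln (l1norm (popz B tau z0' w t))" for t w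
  have key: "(\<Sum>s<t. fm (tau (Suc s) w)) + ln c1 \<le> D t w \<and> D t w \<le> (\<Sum>s<t. fM (tau (Suc s) w)) - ln c2"
    if gt: "g \<le> t" for t w
  proof -
    let ?zA = "popz A tau z0 w t" and ?zB = "popz B tau z0 w t" and ?zB' = "popz B tau z0' w t"
    have vA: "vnn ?zA" by (rule popz_nonneg[OF nnAm v0])
    have vB: "vnn ?zB" by (rule popz_nonneg[OF nnBm v0])
    have vB': "vnn ?zB'" by (rule popz_nonneg[OF nnBm v0'])
    define PM where "PM = (\<Prod>s<t. 1 + Wmin A B (tau (Suc s) w))"
    define PMM where "PMM = (\<Prod>s<t. 1 + Wmax A B (tau (Suc s) w))"
    have PMp: "0 < PM" unfolding PM_def by (rule prod_pos) (rule Wp)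
    have PMMp: "0 < PMM" unfolding PMM_def by (rule prod_pos) (use WMp in auto)
    have lnPM: "ln PM = (\<Sum>s<t. fm (tau (Suc s) w))"
      unfolding PM_def fm_def by (rule ln_prod) (simp, metis Wp less_irrefl)
    have lnPMM: "ln PMM = (\<Sum>s<t. fM (tau (Suc s) w))"
      unfolding PMM_def fM_def by (rule ln_prod) (simp, metis WMp less_irrefl)
    have lowA: "\<forall>i. PM * ?zB $ i \<le> ?zA $ i"
      unfolding PM_def
      by (intro allI popz_lower[OF nnAm nnBm]) (use Wp A_lower[OF ergA ergB pattern] v0 in \<open>auto intro: less_imp_le\<close>)
    have upA: "\<forall>i. ?zA $ i \<le> PMM * ?zB $ i"
      unfolding PMM_def
      by (intro allI popz_upper[OF nnAm]) (use WMp A_upper[OF ergA ergB pattern] v0 in \<open>auto intro: less_imp_le\<close>)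
    have c1B: "\<forall>i. c1 * ?zB' $ i \<le> ?zB $ i" using gc1 gt by (simp add: g_def)
    have c2B: "\<forall>i. c2 * ?zB $ i \<le> ?zB' $ i" using gc2 gt by (simp add: g_def)
    have posB': "\<forall>i. 0 < ?zB' $ i" using gc2 gt by (simp add: g_def)
    have nB'p: "0 < l1norm ?zB'" by (rule l1norm_pos[OF vB' vec_pos_nz[OF posB']])
    have n1: "PM * l1norm ?zB \<le> l1norm ?zA" by (rule l1norm_mono_c[OF vB vA lowA])
    have n2: "c1 * l1norm ?zB' \<le> l1norm ?zB" by (rule l1norm_mono_c[OF vB' vB c1B])
    have n3: "l1norm ?zA \<le> PMM * l1norm ?zB" by (rule l1norm_mono_c'[OF vB vA upA])
    have n4: "c2 * l1norm ?zB \<le> l1norm ?zB'" by (rule l1norm_mono_c[OF vB vB' c2B])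
    have q1: "PM * (c1 * l1norm ?zB') \<le> l1norm ?zA"
      using n1 n2 PMp by (meson mult_left_mono less_imp_le order_trans)
    have q1p: "0 < PM * (c1 * l1norm ?zB')" using PMp gc1(2) nB'p by simp
    have "ln (PM * (c1 * l1norm ?zB')) \<le> ln (l1norm ?zA)" using q1 q1p by simp
    then have low: "ln PM + ln c1 + ln (l1norm ?zB') \<le> ln (l1norm ?zA)"
      using PMp gc1(2) nB'p by (simp add: ln_mult)
    have nBle: "l1norm ?zB \<le> l1norm ?zB' / c2" using n4 gc2(2) by (simp add: field_simps)
    have q2: "l1norm ?zA \<le> PMM * (l1norm ?zB' / c2)"
      using n3 nBle PMMp by (meson mult_left_mono less_imp_le order_trans)
    have zAp: "0 < l1norm ?zA" using q1 q1p by linarith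
    have "ln (l1norm ?zA) \<le> ln (PMM * (l1norm ?zB' / c2))" using q2 zAp by simp
    then have up: "ln (l1norm ?zA) \<le> ln PMM + ln (l1norm ?zB') - ln c2"
      using PMMp gc2(2) nB'p by (simp add: ln_mult ln_div)
    show ?thesis using low up lnPM lnPMM unfolding D_def by linarith
  qed
  have sumb: "\<bar>\<Sum>s<t. f (tau (Suc s) w)\<bar> \<le> real t * K" if "\<forall>e. \<bar>f e\<bar> \<le> K" for f :: "'i \<Rightarrow> real" and t w
  proof -
    have "\<bar>\<Sum>s<t. f (tau (Suc s) w)\<bar> \<le> (\<Sum>s<t. \<bar>f (tau (Suc s) w)\<bar>)" by (rule sum_abs)
    also have "\<dots> \<le> (\<Sum>s<t. K)" by (rule sum_mono) (use that in auto)
    finally show ?thesis by simp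
  qed
  have Dbnd: "\<bar>D t w\<bar> \<le> real t * K + (\<bar>ln c1\<bar> + \<bar>ln c2\<bar>)" if "g \<le> t" for t w
    using key[OF that, of w] sumb[OF K(1), where t=t and w=w] sumb[OF K(2), where t=t and w=w] by linarith
  have Dmeas: "D t \<in> borel_measurable M" for t
    unfolding D_def
    by (intro borel_measurable_diff popz_meas[OF chain, where F="\<lambda>x. ln (l1norm x)"])
  have lim: "AE w in M. (\<lambda>t. D t w / real t) \<longlonglongrightarrow> LA - LB"
    using sgrA sgrB unfolding is_log_sgr_def
  proof eventually_elim
    case (elim w)
    then show ?case unfolding D_def diff_divide_distrib by (rule tendsto_diff)
  qed
  have r1: "(\<Sum>\<^sub>\<infinity>e. \<pi> e * fm e) \<le> LA - LB"
    by (rule sgr_lower[OF chain conv dist K(1) Dmeas lim _ Dbnd g1, of "ln c1"])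
       (use key in auto)
  have lim2: "AE w in M. (\<lambda>t. (- D t w) / real t) \<longlonglongrightarrow> - (LA - LB)"
    using lim
  proof eventually_elim
    case (elim w)
    then show ?case using tendsto_minus[OF elim] by simp
  qed
  have K2: "\<forall>e. \<bar>- fM e\<bar> \<le> K" using K(2) by simp
  have Dmeas2: "(\<lambda>w. - D t w) \<in> borel_measurable M" for t using Dmeas[of t] by measurable
  have r2: "(\<Sum>\<^sub>\<infinity>e. \<pi> e * (- fM e)) \<le> - (LA - LB)"
  proof (rule sgr_lower[OF chain conv dist K2 Dmeas2 lim2, of g "ln c2" K "\<bar>ln c1\<bar> + \<bar>ln c2\<bar>"])
    show "(\<Sum>s<t. - fM (tau (Suc s) w)) + ln c2 \<le> - D t w" if "g \<le> t" "w \<in> space M" for t w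
      using key[OF that(1), of w] by (simp add: sum_negf)
    show "\<bar>- D t w\<bar> \<le> real t * K + (\<bar>ln c1\<bar> + \<bar>ln c2\<bar>)" if "g \<le> t" "w \<in> space M" for t w
      using Dbnd[OF that(1)] by simp
  qed (rule g1)
  have "(\<Sum>\<^sub>\<infinity>e. \<pi> e * (- fM e)) = - (\<Sum>\<^sub>\<infinity>e. \<pi> e * fM e)"
    by (simp add: infsum_uminus)
  then have r2': "LA \<le> LB + (\<Sum>\<^sub>\<infinity>e. \<pi> e * fM e)" using r2 by linarith
  show ?thesis using r1 r2' unfolding fm_def fM_def by linarith
qed



lemma mat_list_prod_snoc: "mat_list_prod (xs @ [y]) = mat_list_prod xs ** y"
proof (induction xs)
  case Nil then show ?case by (simp add: mat_list_prod_def)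
next
  case (Cons x xs) then show ?case by (simp add: mat_list_prod_Cons matrix_mul_assoc)
qed

lemma ergodic_col_pos:
  assumes "ergodic_family X"
  shows "\<exists>i. 0 < X e $ i $ j"
proof -
  from assms obtain g where g: "g \<ge> 1" "\<forall>es. length es = g \<longrightarrow> (\<forall>i j. 0 < mat_list_prod (map X es) $ i $ j)"
    unfolding ergodic_family_def by blast
  have nn: "\<forall>e. nonneg_mat (X e)" using assms unfolding ergodic_family_def by blast
  let ?es = "replicate (g - 1) e @ [e]"
  have "length ?es = g" using g by simp
  then have pos: "0 < mat_list_prod (map X ?es) $ j $ j" using g by blast
  show ?thesis
  proof (rule ccontr)
    assume "\<not> ?thesis"
    then have "\<forall>i. X e $ i $ j = 0" using nn unfolding nonneg_mat_def by (metis less_eq_real_def)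
    then have "mat_list_prod (map X ?es) $ j $ j = 0"
      by (simp add: mat_list_prod_snoc matrix_matrix_mult_def)
    with pos show False by simp
  qed
qed

lemma popz_const_eig:
  assumes "\<forall>i. (Bc *v u) $ i = r * u $ i"
  shows "popz (\<lambda>_. Bc) tau u w t = (r ^ t) *\<^sub>R u"
proof (induction t)
  case 0 then show ?case by simp
next
  case (Suc t)
  have "Bc *v ((r ^ t) *\<^sub>R u) = (r ^ t) *\<^sub>R (Bc *v u)"
    by (simp add: vec_eq_iff matrix_vector_mult_def sum_distrib_left algebra_simps)
  also have "Bc *v u = r *\<^sub>R u" using assms by (simp add: vec_eq_iff)
  finally show ?case using Suc by (simp add: algebra_simps)
qed

lemma perron:
  fixes Bc :: "real^'n^'n"
  assumes erg: "ergodic_family (\<lambda>_::'i. Bc)"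
  shows "\<exists>u r. (\<forall>i. 0 < u $ i) \<and> 0 < r \<and> (\<forall>i. (Bc *v u) $ i = r * u $ i)"
proof -
  have nnB: "\<And>i j. 0 \<le> Bc $ i $ j" using erg unfolding ergodic_family_def nonneg_mat_def by blast
  define S where "S = {x::real^'n. (\<forall>i. 0 \<le> x $ i) \<and> (\<Sum>i\<in>UNIV. x $ i) = 1}"
  define s where "s x = (\<Sum>i\<in>UNIV. (Bc *v x) $ i)" for x
  have spos: "0 < s x" if "x \<in> S" for x
  proof -
    have x: "\<forall>i. 0 \<le> x $ i" "(\<Sum>i\<in>UNIV. x $ i) = 1" using that by (auto simp: S_def)
    obtain j where j: "0 < x $ j"
    proof (rule ccontr)
      assume "\<not> thesis"
      then have "\<forall>j. x $ j \<le> 0" using that by (meson not_le)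
      then have "(\<Sum>i\<in>UNIV. x $ i) \<le> 0" by (simp add: sum_nonpos)
      with x show False by simp
    qed
    obtain i where i: "0 < Bc $ i $ j" using ergodic_col_pos[OF erg] by blast
    have "0 < Bc $ i $ j * x $ j" using i j by simp
    also have "\<dots> \<le> (Bc *v x) $ i"
      unfolding mv_nth by (rule member_le_sum) (use nnB x in auto)
    also have "\<dots> \<le> s x"
      unfolding s_def by (rule member_le_sum) (use nnB x in \<open>auto simp: mv_nth intro!: sum_nonneg\<close>)
    finally show ?thesis .
  qed
  define f where "f x = inverse (s x) *\<^sub>R (Bc *v x)" for x
  have cont_s: "continuous_on S s"
    unfolding s_def by (intro continuous_on_sum continuous_on_component matrix_vector_mult_linear_continuous_on)
  have contf: "continuous_on S f"
    unfolding f_def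
    by (intro continuous_on_scaleR continuous_on_inverse cont_s matrix_vector_mult_linear_continuous_on)
       (use spos in force)
  have closedS: "closed S"
  proof -
    have "S = {x. \<forall>i. 0 \<le> x $ i} \<inter> {x. (\<Sum>i\<in>UNIV. x $ i) = 1}" by (auto simp: S_def)
    moreover have "closed {x::real^'n. \<forall>i. 0 \<le> x $ i}"
      by (intro closed_Collect_all closed_Collect_le continuous_on_const continuous_on_component continuous_on_id)
    moreover have "closed {x::real^'n. (\<Sum>i\<in>UNIV. x $ i) = 1}"
      by (intro closed_Collect_eq continuous_on_sum continuous_on_const continuous_on_component continuous_on_id)
    ultimately show ?thesis by (simp add: closed_Int)
  qed
  have boundedS: "bounded S"
  proof -
    have "norm x \<le> 1" if "x \<in> S" for x
    proof -
      have "norm x \<le> (\<Sum>i\<in>UNIV. \<bar>x $ i\<bar>)" by (rule norm_le_l1_cart)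
      also have "\<dots> = 1" using that by (simp add: S_def)
      finally show ?thesis .
    qed
    then show ?thesis by (auto simp: bounded_iff)
  qed
  have compactS: "compact S" using closedS boundedS by (simp add: compact_eq_bounded_closed)
  have convexS: "convex S"
    unfolding convex_def S_def
    by (auto simp: sum.distrib sum_distrib_left[symmetric])
  have neS: "S \<noteq> {}"
  proof -
    have "(\<chi> i. 1 / real CARD('n)) \<in> S" by (simp add: S_def)
    then show ?thesis by blast
  qed
  have fS: "f \<in> S \<rightarrow> S"
  proof
    fix x assume xS: "x \<in> S"
    have sp: "0 < s x" by (rule spos[OF xS])
    have xn: "\<forall>i. 0 \<le> x $ i" using xS by (simp add: S_def)
    have "\<forall>i. 0 \<le> f x $ i"
    proof
      fix i
      have "0 \<le> inverse (s x)" using sp by simp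
      moreover have "0 \<le> (\<Sum>j\<in>UNIV. Bc $ i $ j * x $ j)" using xn nnB by (auto intro!: sum_nonneg)
      ultimately show "0 \<le> f x $ i" by (simp add: f_def mv_nth)
    qed
    moreover have "(\<Sum>i\<in>UNIV. f x $ i) = 1"
      using sp by (simp add: f_def s_def sum_distrib_left[symmetric])
    ultimately show "f x \<in> S" by (simp add: S_def)
  qed
  obtain x where xS: "x \<in> S" and fx: "f x = x"
    using brouwer[OF compactS convexS neS contf fS] by blast
  define r where "r = s x"
  have rp: "0 < r" using spos[OF xS] by (simp add: r_def)
  have eig: "\<forall>i. (Bc *v x) $ i = r * x $ i"
  proof
    fix i
    have "f x $ i = x $ i" using fx by simp
    then have "inverse r * (Bc *v x) $ i = x $ i" by (simp add: f_def r_def)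
    then show "(Bc *v x) $ i = r * x $ i" using rp by (simp add: field_simps)
  qed
  have xv: "vnn x" and xnz: "x \<noteq> 0" using xS by (auto simp: S_def vnn_def)
  define T0 :: "nat \<Rightarrow> unit \<Rightarrow> 'i" where "T0 = (\<lambda>_ _. undefined)"
  have ex: "\<exists>g c. 1 \<le> g \<and> 0 < c \<and> (\<forall>w t i. g \<le> t \<longrightarrow>
     c * popz (\<lambda>_::'i. Bc) T0 x w t $ i \<le> popz (\<lambda>_::'i. Bc) T0 x w t $ i
     \<and> 0 < popz (\<lambda>_::'i. Bc) T0 x w t $ i)"
    by (rule ergodic_compare[OF erg xv xnz xv])
  then obtain g where gpos: "\<forall>t i. g \<le> t \<longrightarrow> 0 < popz (\<lambda>_::'i. Bc) T0 x () t $ i"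
    by blast
  have "\<forall>i. 0 < x $ i"
  proof
    fix i
    have "0 < popz (\<lambda>_::'i. Bc) T0 x () g $ i" using gpos by blast
    then have "0 < r ^ g * x $ i" by (simp add: popz_const_eig[OF eig])
    then show "0 < x $ i" using rp by (simp add: zero_less_mult_iff)
  qed
  then show ?thesis using rp eig by blast
qed



lemma eig_indep:
  fixes X :: "'a::field^'n^'n" and ev :: "'a \<Rightarrow> 'a^'n"
  assumes "finite C" "\<forall>c\<in>C. ev c \<noteq> 0 \<and> X *v ev c = c *s ev c"
  shows "\<forall>a. (\<Sum>c\<in>C. a c *s ev c) = 0 \<longrightarrow> (\<forall>c\<in>C. a c = 0)"
  using assms
proof (induction C rule: finite_induct)
  case empty then show ?case by simp
next
  case (insert c0 C)
  show ?case
  proof (intro allI impI)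
    fix a assume H: "(\<Sum>c\<in>insert c0 C. a c *s ev c) = 0"
    have ev: "\<forall>c\<in>C. ev c \<noteq> 0 \<and> X *v ev c = c *s ev c" using insert.prems by blast
    have ev0: "ev c0 \<noteq> 0" "X *v ev c0 = c0 *s ev c0" using insert.prems by auto
    define S1 where "S1 = (\<Sum>c\<in>C. a c *s ev c)"
    have H1: "a c0 *s ev c0 + S1 = 0" using H insert.hyps by (simp add: S1_def)
    have XS1: "X *v S1 = (\<Sum>c\<in>C. (a c * c) *s ev c)"
    proof -
      have "X *v S1 = (\<Sum>c\<in>C. X *v (a c *s ev c))" unfolding S1_def by (rule vec.sum)
      also have "\<dots> = (\<Sum>c\<in>C. (a c * c) *s ev c)"
        by (rule sum.cong) (use ev in \<open>auto simp: vec.scale\<close>)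
      finally show ?thesis .
    qed
    have H2: "(a c0 * c0) *s ev c0 + (\<Sum>c\<in>C. (a c * c) *s ev c) = 0"
    proof -
      have "X *v (a c0 *s ev c0 + S1) = 0" using H1 by simp
      then show ?thesis using ev0 XS1 by (simp add: vec.add vec.scale)
    qed
    have H3: "(c0 * a c0) *s ev c0 + (\<Sum>c\<in>C. (c0 * a c) *s ev c) = 0"
    proof -
      have "c0 *s (a c0 *s ev c0 + S1) = 0" using H1 by simp
      then show ?thesis by (simp add: S1_def vec.scale_sum_right vector_sadd_rdistrib vector_add_ldistrib)
    qed
    have "(\<Sum>c\<in>C. (a c * c - c0 * a c) *s ev c) = 0"
    proof -
      have "(\<Sum>c\<in>C. (a c * c - c0 * a c) *s ev c) = (\<Sum>c\<in>C. (a c * c) *s ev c) - (\<Sum>c\<in>C. (c0 * a c) *s ev c)"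
        by (simp add: vec.scale_left_diff_distrib sum_subtractf)
      also have "\<dots> = 0" using H2 H3 by (simp add: mult.commute eq_neg_iff_add_eq_0[symmetric])
      finally show ?thesis .
    qed
    then have z: "\<forall>c\<in>C. a c * c - c0 * a c = 0"
      using insert.IH[OF ev, rule_format, of "\<lambda>c. a c * c - c0 * a c"] by simp
    have zC: "\<forall>c\<in>C. a c = 0"
    proof
      fix c assume cC: "c \<in> C"
      have "a c * (c - c0) = 0" using z cC by (simp add: algebra_simps)
      moreover have "c \<noteq> c0" using cC insert.hyps by auto
      ultimately show "a c = 0" by simp
    qed
    then have "S1 = 0" by (simp add: S1_def)
    then have "a c0 *s ev c0 = 0" using H1 by simp
    then have "a c0 = 0" using ev0 by (simp add: vec.scale_eq_0_iff)
    then show "\<forall>c\<in>insert c0 C. a c = 0" using zC by simp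
  qed
qed

lemma eig_finite:
  fixes X :: "'a::field^'n^'n"
  shows "finite {c. \<exists>v. v \<noteq> 0 \<and> X *v v = c *s v}"
proof (rule ccontr)
  let ?E = "{c. \<exists>v. v \<noteq> 0 \<and> X *v v = c *s v}"
  assume "infinite ?E"
  then obtain F where F: "finite F" "card F = Suc CARD('n)" "F \<subseteq> ?E"
    using infinite_arbitrarily_large by blast
  define ev where "ev c = (SOME v. v \<noteq> 0 \<and> X *v v = c *s v)" for c
  have evp: "\<forall>c\<in>F. ev c \<noteq> 0 \<and> X *v ev c = c *s ev c"
  proof
    fix c assume "c \<in> F"
    then have "\<exists>v. v \<noteq> 0 \<and> X *v v = c *s v" using F by blast
    then show "ev c \<noteq> 0 \<and> X *v ev c = c *s ev c" unfolding ev_def by (rule someI_ex)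
  qed
  have inj: "inj_on ev F"
  proof (rule inj_onI)
    fix c1 c2 assume c: "c1 \<in> F" "c2 \<in> F" "ev c1 = ev c2"
    then have "c1 *s ev c1 = c2 *s ev c1" using evp by metis
    then show "c1 = c2" using evp c by (simp add: vec.scale_cancel_right)
  qed
  have ind: "vec.independent (ev ` F)"
    unfolding vec.independent_explicit
  proof (intro conjI allI impI ballI)
    show "finite (ev ` F)" using F by simp
    fix cc assume S: "(\<Sum>v\<in>ev ` F. cc v *s v) = 0"
    fix v assume vF: "v \<in> ev ` F"
    have "(\<Sum>c\<in>F. cc (ev c) *s ev c) = 0" using S by (simp add: sum.reindex[OF inj])
    then have "\<forall>c\<in>F. cc (ev c) = 0" using eig_indep[OF F(1) evp, rule_format, of "\<lambda>c. cc (ev c)"] by blast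
    then show "cc v = 0" using vF by blast
  qed
  have "card (ev ` F) \<le> vec.dim (ev ` F)" using vec.independent_bound_general[OF ind] by blast
  also have "\<dots> \<le> vec.dim (UNIV :: ('a^'n) set)" by (rule vec.dim_subset) simp
  also have "\<dots> = CARD('n)" by (simp add: vec.dim_UNIV card_cart_basis)
  finally have "card F \<le> CARD('n)" using card_image[OF inj] by simp
  with F show False by simp
qed



lemma spec_rad:
  fixes Bc :: "real^'n^'n"
  assumes nn: "\<forall>i j. 0 \<le> Bc $ i $ j" and u: "\<forall>i. 0 < u $ i" and r: "0 < r"
    and eig: "\<forall>i. (Bc *v u) $ i = r * u $ i"
  shows "spectral_radius Bc = r"
proof -
  define Bcc :: "complex^'n^'n" where "Bcc = (\<chi> i j. complex_of_real (Bc $ i $ j))"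
  define E where "E = {c. \<exists>v. v \<noteq> 0 \<and> Bcc *v v = c *s v}"
  have seteq: "{cmod c | c. \<exists>v :: complex^'n. v \<noteq> 0 \<and>
       (\<chi> i j. complex_of_real (Bc $ i $ j)) *v v = c *s v} = cmod ` E"
    unfolding E_def Bcc_def by auto
  have fin: "finite (cmod ` E)" unfolding E_def using eig_finite[of Bcc] by simp
  have rin: "r \<in> cmod ` E"
  proof -
    define v :: "complex^'n" where "v = (\<chi> i. complex_of_real (u $ i))"
    have vnz: "v \<noteq> 0"
    proof
      assume "v = 0"
      then have "v $ undefined = 0" by simp
      then show False using u[rule_format, of undefined] by (simp add: v_def)
    qed
    have "Bcc *v v = complex_of_real r *s v"
    proof (subst vec_eq_iff, intro allI)
      fix i
      have "(Bcc *v v) $ i = complex_of_real (\<Sum>j\<in>UNIV. Bc $ i $ j * u $ j)"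
        by (simp add: Bcc_def v_def matrix_vector_mult_def)
      also have "\<dots> = complex_of_real ((Bc *v u) $ i)" by (simp add: mv_nth)
      also have "\<dots> = (complex_of_real r *s v) $ i" using eig by (simp add: v_def)
      finally show "(Bcc *v v) $ i = (complex_of_real r *s v) $ i" .
    qed
    then have "complex_of_real r \<in> E" unfolding E_def using vnz by blast
    moreover have "cmod (complex_of_real r) = r" using r by simp
    ultimately show ?thesis by (metis image_eqI)
  qed
  have bound: "cmod c \<le> r" if cE: "c \<in> E" for c
  proof -
    obtain v where v: "v \<noteq> 0" "Bcc *v v = c *s v" using cE unfolding E_def by blast
    define a where "a i = cmod (v $ i)" for i
    define q where "q i = a i / u $ i" for i
    define s where "s = Max (range q)"
    have qs: "q i \<le> s" for i unfolding s_def by (rule Max_ge) auto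
    obtain i0 where i0: "q i0 = s"
    proof -
      have "s \<in> range q" unfolding s_def by (rule Max_in) auto
      then show ?thesis using that by blast
    qed
    have ale: "a i \<le> s * u $ i" for i
      using qs[of i] u by (simp add: q_def divide_le_eq)
    obtain k where k: "v $ k \<noteq> 0" using v(1) by (metis vec_eq_iff zero_index)
    have "0 < q k" using k u by (simp add: q_def a_def)
    then have sp: "0 < s" using qs[of k] by linarith
    have ui: "0 < u $ i0" using u by blast
    have "a i0 = q i0 * u $ i0" using ui by (simp add: q_def)
    then have ai0: "a i0 = s * u $ i0" using i0 by simp
    have ai0p: "0 < a i0" using ai0 sp u by simp
    have "cmod c * a i0 = cmod ((c *s v) $ i0)" by (simp add: a_def norm_mult)
    also have "\<dots> = cmod (\<Sum>j\<in>UNIV. complex_of_real (Bc $ i0 $ j) * v $ j)"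
      using v(2) by (simp add: Bcc_def matrix_vector_mult_def vec_eq_iff[symmetric] flip: v(2))
    also have "\<dots> \<le> (\<Sum>j\<in>UNIV. cmod (complex_of_real (Bc $ i0 $ j) * v $ j))" by (rule norm_sum)
    also have "\<dots> = (\<Sum>j\<in>UNIV. Bc $ i0 $ j * a j)" using nn by (simp add: norm_mult a_def)
    also have "\<dots> \<le> (\<Sum>j\<in>UNIV. Bc $ i0 $ j * (s * u $ j))"
      by (rule sum_mono) (use nn ale in \<open>auto intro: mult_left_mono\<close>)
    also have "\<dots> = s * (Bc *v u) $ i0" by (simp add: mv_nth sum_distrib_left algebra_simps)
    also have "\<dots> = r * a i0" using eig ai0 by (simp add: algebra_simps)
    finally have "cmod c * a i0 \<le> r * a i0" .
    then show ?thesis using ai0p by simp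
  qed
  have "Max (cmod ` E) = r"
    by (rule Max_eqI[OF fin]) (use bound rin in auto)
  then show ?thesis unfolding spectral_radius_def seteq .
qed

lemma sgr_const:
  fixes M :: "'w measure" and tau :: "nat \<Rightarrow> 'w \<Rightarrow> 'i" and Bc :: "real^'n^'n"
  assumes ps: "prob_space M" and erg: "ergodic_family (\<lambda>_::'i. Bc)"
    and v: "vnn z0'" and nz: "z0' \<noteq> 0"
    and sgr: "is_log_sgr M (\<lambda>_. Bc) tau z0' LB"
    and u: "\<forall>i. 0 < u $ i" and r: "0 < r" and eig: "\<forall>i. (Bc *v u) $ i = r * u $ i"
  shows "LB = ln r"
proof -
  have vu: "vnn u" using u by (simp add: vnn_def less_imp_le)
  have unz: "u \<noteq> 0" by (rule vec_pos_nz[OF u])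
  obtain g1 c1 where gc1: "1 \<le> g1" "0 < c1" "\<forall>w t i. g1 \<le> t \<longrightarrow>
     c1 * popz (\<lambda>_. Bc) tau u w t $ i \<le> popz (\<lambda>_. Bc) tau z0' w t $ i \<and> 0 < popz (\<lambda>_. Bc) tau z0' w t $ i"
    using ergodic_compare[OF erg v nz vu, of tau] by blast
  obtain g2 c2 where gc2: "1 \<le> g2" "0 < c2" "\<forall>w t i. g2 \<le> t \<longrightarrow>
     c2 * popz (\<lambda>_. Bc) tau z0' w t $ i \<le> popz (\<lambda>_. Bc) tau u w t $ i \<and> 0 < popz (\<lambda>_. Bc) tau u w t $ i"
    using ergodic_compare[OF erg vu unz v, of tau] by blast
  define g where "g = max g1 g2"
  have nu: "0 < l1norm u" by (rule l1norm_pos[OF vu unz])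
  have nnBc: "nonneg_mat Bc" using erg unfolding ergodic_family_def by blast
  have ineq: "ln c1 + ln (l1norm u) + real t * ln r \<le> ln (l1norm (popz (\<lambda>_. Bc) tau z0' w t))
     \<and> ln (l1norm (popz (\<lambda>_. Bc) tau z0' w t)) \<le> ln (l1norm u) - ln c2 + real t * ln r"
    if gt: "g \<le> t" for w t
  proof -
    let ?Z = "popz (\<lambda>_. Bc) tau z0' w t"
    have U: "popz (\<lambda>_. Bc) tau u w t = (r ^ t) *\<^sub>R u" by (rule popz_const_eig[OF eig])
    have vZ: "vnn ?Z" by (rule popz_nonneg) (use nnBc v in auto)
    have vU: "vnn ((r ^ t) *\<^sub>R u)" using vu r by (simp add: vnn_def)
    have nU: "l1norm ((r ^ t) *\<^sub>R u) = r ^ t * l1norm u"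
      using vu vU by (simp add: l1norm_nn sum_distrib_left)
    have a1': "\<forall>i. c1 * popz (\<lambda>_. Bc) tau u w t $ i \<le> ?Z $ i" using gc1(3) gt by (simp add: g_def)
    have a2': "\<forall>i. c2 * ?Z $ i \<le> popz (\<lambda>_. Bc) tau u w t $ i" using gc2(3) gt by (simp add: g_def)
    have a1: "\<forall>i. c1 * ((r ^ t) *\<^sub>R u) $ i \<le> ?Z $ i" using a1' U by simp
    have a2: "\<forall>i. c2 * ?Z $ i \<le> ((r ^ t) *\<^sub>R u) $ i" using a2' U by simp
    have b1: "c1 * (r ^ t * l1norm u) \<le> l1norm ?Z" using l1norm_mono_c[OF vU vZ a1] nU by simp
    have b2: "c2 * l1norm ?Z \<le> r ^ t * l1norm u" using l1norm_mono_c[OF vZ vU a2] nU by simp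
    have p1: "0 < c1 * (r ^ t * l1norm u)" using gc1 r nu by simp
    have pZ: "0 < l1norm ?Z" using p1 b1 by linarith
    have "ln (c1 * (r ^ t * l1norm u)) \<le> ln (l1norm ?Z)" using b1 p1 by simp
    then have l1: "ln c1 + ln (l1norm u) + real t * ln r \<le> ln (l1norm ?Z)"
      using gc1 r nu by (simp add: ln_mult ln_realpow)
    have p2: "0 < c2 * l1norm ?Z" using gc2(2) pZ by simp
    have p3: "0 < r ^ t * l1norm u" using r nu by simp
    have "ln (c2 * l1norm ?Z) \<le> ln (r ^ t * l1norm u)" using b2 p2 p3 by (subst ln_le_cancel_iff) auto
    then have l2: "ln c2 + ln (l1norm ?Z) \<le> real t * ln r + ln (l1norm u)"
      using gc2 r nu pZ by (simp add: ln_mult ln_realpow)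
    show ?thesis using l1 l2 by linarith
  qed
  have conv: "(\<lambda>t. ln (l1norm (popz (\<lambda>_. Bc) tau z0' w t)) / real t) \<longlonglongrightarrow> ln r" for w
  proof (rule tendsto_sandwich)
    show "\<forall>\<^sub>F t in sequentially. (ln c1 + ln (l1norm u)) / real t + ln r \<le> ln (l1norm (popz (\<lambda>_. Bc) tau z0' w t)) / real t"
    proof (rule eventually_sequentiallyI[of g])
      fix t assume t: "g \<le> t"
      then have tp: "0 < real t" using gc1 by (simp add: g_def)
      have "(ln c1 + ln (l1norm u)) / real t + ln r = (ln c1 + ln (l1norm u) + real t * ln r) / real t"
        using tp by (simp add: field_simps)
      also have "\<dots> \<le> ln (l1norm (popz (\<lambda>_. Bc) tau z0' w t)) / real t"
        using ineq[OF t, of w] tp by (simp add: divide_right_mono)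
      finally show "(ln c1 + ln (l1norm u)) / real t + ln r \<le> ln (l1norm (popz (\<lambda>_. Bc) tau z0' w t)) / real t" .
    qed
    show "\<forall>\<^sub>F t in sequentially. ln (l1norm (popz (\<lambda>_. Bc) tau z0' w t)) / real t \<le> (ln (l1norm u) - ln c2) / real t + ln r"
    proof (rule eventually_sequentiallyI[of g])
      fix t assume t: "g \<le> t"
      then have tp: "0 < real t" using gc1 by (simp add: g_def)
      have "ln (l1norm (popz (\<lambda>_. Bc) tau z0' w t)) / real t \<le> (ln (l1norm u) - ln c2 + real t * ln r) / real t"
        using ineq[OF t, of w] tp by (simp add: divide_right_mono)
      also have "\<dots> = (ln (l1norm u) - ln c2) / real t + ln r"
        using tp by (simp add: field_simps)
      finally show "ln (l1norm (popz (\<lambda>_. Bc) tau z0' w t)) / real t \<le> (ln (l1norm u) - ln c2) / real t + ln r" .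
    qed
    show "(\<lambda>t. (ln c1 + ln (l1norm u)) / real t + ln r) \<longlonglongrightarrow> ln r"
      using tendsto_add[OF lim_const_over_n tendsto_const] by simp
    show "(\<lambda>t. (ln (l1norm u) - ln c2) / real t + ln r) \<longlonglongrightarrow> ln r"
      using tendsto_add[OF lim_const_over_n tendsto_const] by simp
  qed
  have "AE w in M. LB = ln r"
    using sgr unfolding is_log_sgr_def
  proof eventually_elim
    case (elim w)
    show ?case by (rule LIMSEQ_unique[OF elim conv])
  qed
  then show ?thesis using prob_space.AE_const[OF ps] by blast
qed

theorem mainTheorem1:
  fixes M :: "'w measure"
    and tau :: "nat \<Rightarrow> 'w \<Rightarrow> 'i::countable"
    and P :: "'i \<Rightarrow> 'i \<Rightarrow> real"
    and \<pi> :: "'i \<Rightarrow> real"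
    and A B :: "'i \<Rightarrow> real^'n^'n"
    and z0 z0' :: "real^'n"
    and LA LB :: real
  assumes chain: "markov_chain M tau P"
    and stat: "stationary P \<pi>"
    and uniq: "\<forall>p. stationary P p \<longrightarrow> p = \<pi>"
    and conv: "geom_converges P \<pi>"
    and ergA: "ergodic_family A"
    and ergB: "ergodic_family B"
    and pattern: "\<forall>e i j. B e $ i $ j = 0 \<longleftrightarrow> A e $ i $ j = 0"
    and z0_nonneg: "\<forall>i. 0 \<le> z0 $ i" and z0_nz: "z0 \<noteq> 0"
    and z0'_nonneg: "\<forall>i. 0 \<le> z0' $ i" and z0'_nz: "z0' \<noteq> 0"
    and sgrA: "is_log_sgr M A tau z0 LA"
    and sgrB: "is_log_sgr M B tau z0' LB"
  shows "(\<forall>e. Wmin A B e \<le> Wmax A B e \<and> -1 < Wmin A B e)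
     \<and> LB + (\<Sum>\<^sub>\<infinity>e. \<pi> e * ln (1 + Wmin A B e)) \<le> LA
     \<and> LA \<le> LB + (\<Sum>\<^sub>\<infinity>e. \<pi> e * ln (1 + Wmax A B e))
     \<and> (\<forall>Bc. (\<forall>e. B e = Bc) \<longrightarrow>
          ln (spectral_radius Bc) + (\<Sum>\<^sub>\<infinity>e. \<pi> e * ln (1 + Wmin A B e)) \<le> LA
        \<and> LA \<le> ln (spectral_radius Bc) + (\<Sum>\<^sub>\<infinity>e. \<pi> e * ln (1 + Wmax A B e)))"
proof -
  have part1: "\<forall>e. Wmin A B e \<le> Wmax A B e \<and> -1 < Wmin A B e"
    using Wmin_le_Wmax[OF ergA ergB pattern] W_pos[OF ergA ergB pattern] by blast
  have part2: "LB + (\<Sum>\<^sub>\<infinity>e. \<pi> e * ln (1 + Wmin A B e)) \<le> LA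
     \<and> LA \<le> LB + (\<Sum>\<^sub>\<infinity>e. \<pi> e * ln (1 + Wmax A B e))"
    by (rule sgr_bounds[OF chain stat conv ergA ergB pattern z0_nonneg z0_nz z0'_nonneg z0'_nz sgrA sgrB])
  have part3: "LB = ln (spectral_radius Bc)" if hB: "\<forall>e. B e = Bc" for Bc
  proof -
    have Beq: "B = (\<lambda>_. Bc)" using hB by auto
    have erg: "ergodic_family (\<lambda>_::'i. Bc)" using ergB Beq by simp
    obtain u r where ur: "\<forall>i. 0 < u $ i" "0 < r" "\<forall>i. (Bc *v u) $ i = r * u $ i"
      using perron[OF erg] by blast
    have nn: "\<forall>i j. 0 \<le> Bc $ i $ j" using erg unfolding ergodic_family_def nonneg_mat_def by blast
    have sr: "spectral_radius Bc = r" by (rule spec_rad[OF nn ur])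
    have v: "vnn z0'" using z0'_nonneg by (simp add: vnn_def)
    have "LB = ln r"
      by (rule sgr_const[OF ps[OF chain] erg v z0'_nz _ ur]) (use sgrB Beq in simp)
    then show ?thesis using sr by simp
  qed
  show ?thesis using part1 part2 part3 by auto
qed


end
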